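(* Let $A$ be an Artin algebra, $k\ge1$ an integer and $\mathcal C_1,\dots,\mathcal C_k$ subcategories of $A\text{-mod}$. Then $$\max\{\operatorname{ed}\mathcal C_i\mid 1\le i\le k\}\le\operatorname{ed}(\mathcal C_1\bullet\mathcal C_2\bullet\cdots\bullet\mathcal C_k)\le\sum_{i=1}^k\operatorname{ed}\mathcal C_i+k-1.$$
   Context: Subcategories are full, additive and closed under isomorphisms. For subcategories $\mathcal T_1,\mathcal T_2$, $\mathcal T_1\bullet\mathcal T_2:=\operatorname{add}\{X\mid\exists$ exact $0\to T_1\to X\to T_2\to0$, $T_i\in\mathcal T_i\}$ ($\operatorname{add}$ = closure under finite direct sums and direct summands); $\bullet$ is associative. For a module $T$: $[T]_0=\{0\}$, $[T]_1=\operatorname{add}(T)$, $[T]_n=[T]_1\bullet[T]_{n-1}$. $\operatorname{ed}\mathcal C=\inf\{n\ge0\mid\mathcal C\subseteq[T]_{n+1}$ for some $T\in A\text{-mod}\}$. *)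

theory Defs
  imports "HOL-Algebra.Module" "HOL-Algebra.Ideal" "HOL-Library.Extended_Nat"
begin

definition artinian_cring :: "'a ring \<Rightarrow> bool" where
  "artinian_cring R \<longleftrightarrow> cring R \<and>
     (\<forall>I :: nat \<Rightarrow> 'a set. (\<forall>n. ideal (I n) R \<and> I (Suc n) \<subseteq> I n) \<longrightarrow> (\<exists>N. \<forall>n\<ge>N. I n = I N))"

definition artin_algebra :: "'a ring \<Rightarrow> bool" where
  "artin_algebra A \<longleftrightarrow> ring A \<and>
     (\<exists>(R :: 'a ring) \<phi>. artinian_cring R \<and> \<phi> \<in> ring_hom R A \<and>
        (\<forall>r\<in>carrier R. \<forall>a\<in>carrier A. \<phi> r \<otimes>\<^bsub>A\<^esub> a = a \<otimes>\<^bsub>A\<^esub> \<phi> r) \<and>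
        (\<exists>S. finite S \<and> S \<subseteq> carrier A \<and>
           (\<forall>a\<in>carrier A. \<exists>f\<in>S \<rightarrow> carrier R. a = finsum A (\<lambda>s. \<phi> (f s) \<otimes>\<^bsub>A\<^esub> s) S)))"

definition left_module :: "'a ring \<Rightarrow> ('a, 'b) module \<Rightarrow> bool" where
  "left_module A M \<longleftrightarrow> ring A \<and> abelian_group M \<and>
     (\<forall>a\<in>carrier A. \<forall>x\<in>carrier M. a \<odot>\<^bsub>M\<^esub> x \<in> carrier M) \<and>
     (\<forall>a\<in>carrier A. \<forall>b\<in>carrier A. \<forall>x\<in>carrier M.
        (a \<oplus>\<^bsub>A\<^esub> b) \<odot>\<^bsub>M\<^esub> x = (a \<odot>\<^bsub>M\<^esub> x) \<oplus>\<^bsub>M\<^esub> (b \<odot>\<^bsub>M\<^esub> x)) \<and>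
     (\<forall>a\<in>carrier A. \<forall>x\<in>carrier M. \<forall>y\<in>carrier M.
        a \<odot>\<^bsub>M\<^esub> (x \<oplus>\<^bsub>M\<^esub> y) = (a \<odot>\<^bsub>M\<^esub> x) \<oplus>\<^bsub>M\<^esub> (a \<odot>\<^bsub>M\<^esub> y)) \<and>
     (\<forall>a\<in>carrier A. \<forall>b\<in>carrier A. \<forall>x\<in>carrier M.
        (a \<otimes>\<^bsub>A\<^esub> b) \<odot>\<^bsub>M\<^esub> x = a \<odot>\<^bsub>M\<^esub> (b \<odot>\<^bsub>M\<^esub> x)) \<and>
     (\<forall>x\<in>carrier M. \<one>\<^bsub>A\<^esub> \<odot>\<^bsub>M\<^esub> x = x)"

definition fin_gen :: "'a ring \<Rightarrow> ('a, 'b) module \<Rightarrow> bool" where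
  "fin_gen A M \<longleftrightarrow> (\<exists>S. finite S \<and> S \<subseteq> carrier M \<and>
     (\<forall>x\<in>carrier M. \<exists>f\<in>S \<rightarrow> carrier A. x = finsum M (\<lambda>s. f s \<odot>\<^bsub>M\<^esub> s) S))"

text \<open>Every finitely generated A-module is a quotient of some A^n, hence isomorphic to a module
  whose elements are sets of lists over the element type of A. We therefore take A-mod to be
  the class of finitely generated left A-modules with carrier type 'a list set (everything
  below is closed under isomorphism).\<close>

type_synonym 'a amod = "('a, 'a list set) module"

definition Amod :: "'a ring \<Rightarrow> 'a amod set" where
  "Amod A = {M. left_module A M \<and> fin_gen A M}"

definition mod_hom :: "'a ring \<Rightarrow> ('a, 'b) module \<Rightarrow> ('a, 'c) module \<Rightarrow> ('b \<Rightarrow> 'c) \<Rightarrow> bool" where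
  "mod_hom A M N f \<longleftrightarrow> f \<in> carrier M \<rightarrow> carrier N \<and>
     (\<forall>x\<in>carrier M. \<forall>y\<in>carrier M. f (x \<oplus>\<^bsub>M\<^esub> y) = f x \<oplus>\<^bsub>N\<^esub> f y) \<and>
     (\<forall>a\<in>carrier A. \<forall>x\<in>carrier M. f (a \<odot>\<^bsub>M\<^esub> x) = a \<odot>\<^bsub>N\<^esub> f x)"

definition mod_iso :: "'a ring \<Rightarrow> ('a, 'b) module \<Rightarrow> ('a, 'c) module \<Rightarrow> bool" where
  "mod_iso A M N \<longleftrightarrow> (\<exists>f. mod_hom A M N f \<and> bij_betw f (carrier M) (carrier N))"

definition zero_mod :: "('a, 'b) module \<Rightarrow> bool" where
  "zero_mod M \<longleftrightarrow> carrier M = {\<zero>\<^bsub>M\<^esub>}"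

definition is_biprod :: "'a ring \<Rightarrow> ('a, 'b) module \<Rightarrow> ('a, 'b) module \<Rightarrow> ('a, 'b) module \<Rightarrow> bool" where
  "is_biprod A X Y Z \<longleftrightarrow> (\<exists>i1 i2 p1 p2.
     mod_hom A Y X i1 \<and> mod_hom A Z X i2 \<and> mod_hom A X Y p1 \<and> mod_hom A X Z p2 \<and>
     (\<forall>y\<in>carrier Y. p1 (i1 y) = y) \<and> (\<forall>z\<in>carrier Z. p2 (i2 z) = z) \<and>
     (\<forall>z\<in>carrier Z. p1 (i2 z) = \<zero>\<^bsub>Y\<^esub>) \<and> (\<forall>y\<in>carrier Y. p2 (i1 y) = \<zero>\<^bsub>Z\<^esub>) \<and>
     (\<forall>x\<in>carrier X. i1 (p1 x) \<oplus>\<^bsub>X\<^esub> i2 (p2 x) = x))"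

inductive_set dsums :: "'a ring \<Rightarrow> 'a amod set \<Rightarrow> 'a amod set" for A S where
  dsums_zero: "M \<in> Amod A \<Longrightarrow> zero_mod M \<Longrightarrow> M \<in> dsums A S"
| dsums_step: "Y \<in> dsums A S \<Longrightarrow> Z \<in> S \<Longrightarrow> X \<in> Amod A \<Longrightarrow> is_biprod A X Y Z \<Longrightarrow> X \<in> dsums A S"

definition addc :: "'a ring \<Rightarrow> 'a amod set \<Rightarrow> 'a amod set" where
  "addc A S = {X \<in> Amod A. \<exists>Y\<in>dsums A S. \<exists>Z\<in>Amod A. is_biprod A Y X Z}"

definition ses :: "'a ring \<Rightarrow> 'a amod \<Rightarrow> 'a amod \<Rightarrow> 'a amod \<Rightarrow> bool" where
  "ses A X Y Z \<longleftrightarrow> (\<exists>f g. mod_hom A X Y f \<and> mod_hom A Y Z g \<and>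
     inj_on f (carrier X) \<and> g ` carrier Y = carrier Z \<and>
     f ` carrier X = {y \<in> carrier Y. g y = \<zero>\<^bsub>Z\<^esub>})"

definition bullet :: "'a ring \<Rightarrow> 'a amod set \<Rightarrow> 'a amod set \<Rightarrow> 'a amod set" where
  "bullet A T1 T2 = addc A {X \<in> Amod A. \<exists>M1\<in>T1. \<exists>M2\<in>T2. ses A M1 X M2}"

text \<open>C_1 \<bullet> C_2 \<bullet> ... \<bullet> C_k for a nonempty list [C_1,...,C_k] (right-nested; \<bullet> is associative).\<close>

fun bullets :: "'a ring \<Rightarrow> 'a amod set list \<Rightarrow> 'a amod set" where
  "bullets A [] = {M \<in> Amod A. zero_mod M}"
| "bullets A [C] = C"
| "bullets A (C # D # Cs) = bullet A C (bullets A (D # Cs))"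

fun layer :: "'a ring \<Rightarrow> 'a amod \<Rightarrow> nat \<Rightarrow> 'a amod set" where
  "layer A T 0 = {M \<in> Amod A. zero_mod M}"
| "layer A T (Suc 0) = addc A {T}"
| "layer A T (Suc (Suc n)) = bullet A (addc A {T}) (layer A T (Suc n))"

definition ed :: "'a ring \<Rightarrow> 'a amod set \<Rightarrow> enat" where
  "ed A C = Inf {enat n | n. \<exists>T\<in>Amod A. C \<subseteq> layer A T (n + 1)}"

definition subcat :: "'a ring \<Rightarrow> 'a amod set \<Rightarrow> bool" where
  "subcat A C \<longleftrightarrow> C \<subseteq> Amod A \<and>
     (\<forall>X\<in>C. \<forall>Y\<in>Amod A. mod_iso A X Y \<longrightarrow> Y \<in> C) \<and>
     (\<forall>M\<in>Amod A. zero_mod M \<longrightarrow> M \<in> C) \<and>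
     (\<forall>Y\<in>C. \<forall>Z\<in>C. \<forall>X\<in>Amod A. is_biprod A X Y Z \<longrightarrow> X \<in> C)"

end

theory Submission
  imports Defs
begin


lemma lm_ag: "left_module A M \<Longrightarrow> abelian_group M"
  by (simp add: left_module_def)
lemma lm_ring: "left_module A M \<Longrightarrow> ring A"
  by (simp add: left_module_def)
lemma lm_smult_closed[simp,intro]: "left_module A M \<Longrightarrow> a \<in> carrier A \<Longrightarrow> x \<in> carrier M \<Longrightarrow> a \<odot>\<^bsub>M\<^esub> x \<in> carrier M"
  by (simp add: left_module_def)
lemma lm_ldistr: "left_module A M \<Longrightarrow> a \<in> carrier A \<Longrightarrow> b \<in> carrier A \<Longrightarrow> x \<in> carrier M \<Longrightarrow>
    (a \<oplus>\<^bsub>A\<^esub> b) \<odot>\<^bsub>M\<^esub> x = (a \<odot>\<^bsub>M\<^esub> x) \<oplus>\<^bsub>M\<^esub> (b \<odot>\<^bsub>M\<^esub> x)"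
  by (simp add: left_module_def)
lemma lm_rdistr: "left_module A M \<Longrightarrow> a \<in> carrier A \<Longrightarrow> x \<in> carrier M \<Longrightarrow> y \<in> carrier M \<Longrightarrow>
    a \<odot>\<^bsub>M\<^esub> (x \<oplus>\<^bsub>M\<^esub> y) = (a \<odot>\<^bsub>M\<^esub> x) \<oplus>\<^bsub>M\<^esub> (a \<odot>\<^bsub>M\<^esub> y)"
  by (simp add: left_module_def)
lemma lm_assoc: "left_module A M \<Longrightarrow> a \<in> carrier A \<Longrightarrow> b \<in> carrier A \<Longrightarrow> x \<in> carrier M \<Longrightarrow>
    (a \<otimes>\<^bsub>A\<^esub> b) \<odot>\<^bsub>M\<^esub> x = a \<odot>\<^bsub>M\<^esub> (b \<odot>\<^bsub>M\<^esub> x)"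
  by (simp add: left_module_def)
lemma lm_one: "left_module A M \<Longrightarrow> x \<in> carrier M \<Longrightarrow> \<one>\<^bsub>A\<^esub> \<odot>\<^bsub>M\<^esub> x = x"
  by (simp add: left_module_def)

lemma lm_smult_zero: assumes "left_module A M" "a \<in> carrier A"
  shows "a \<odot>\<^bsub>M\<^esub> \<zero>\<^bsub>M\<^esub> = \<zero>\<^bsub>M\<^esub>"
proof -
  interpret abelian_group M using lm_ag[OF assms(1)] .
  have "a \<odot>\<^bsub>M\<^esub> \<zero>\<^bsub>M\<^esub> = (a \<odot>\<^bsub>M\<^esub> \<zero>\<^bsub>M\<^esub>) \<oplus>\<^bsub>M\<^esub> (a \<odot>\<^bsub>M\<^esub> \<zero>\<^bsub>M\<^esub>)"
    using lm_rdistr[OF assms(1,2), of "\<zero>\<^bsub>M\<^esub>" "\<zero>\<^bsub>M\<^esub>"] by simp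
  then show ?thesis using assms
    by (metis add.l_cancel_one' lm_smult_closed zero_closed)
qed

lemma lm_zero_smult: assumes "left_module A M" "x \<in> carrier M"
  shows "\<zero>\<^bsub>A\<^esub> \<odot>\<^bsub>M\<^esub> x = \<zero>\<^bsub>M\<^esub>"
proof -
  interpret abelian_group M using lm_ag[OF assms(1)] .
  interpret R: ring A using lm_ring[OF assms(1)] .
  have "\<zero>\<^bsub>A\<^esub> \<odot>\<^bsub>M\<^esub> x = (\<zero>\<^bsub>A\<^esub> \<odot>\<^bsub>M\<^esub> x) \<oplus>\<^bsub>M\<^esub> (\<zero>\<^bsub>A\<^esub> \<odot>\<^bsub>M\<^esub> x)"
    using lm_ldistr[OF assms(1), of "\<zero>\<^bsub>A\<^esub>" "\<zero>\<^bsub>A\<^esub>" x] assms by simp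
  then show ?thesis using assms
    by (metis add.l_cancel_one' lm_smult_closed R.zero_closed)
qed

lemma lm_smult_minus: assumes "left_module A M" "a \<in> carrier A" "x \<in> carrier M"
  shows "a \<odot>\<^bsub>M\<^esub> (\<ominus>\<^bsub>M\<^esub> x) = \<ominus>\<^bsub>M\<^esub> (a \<odot>\<^bsub>M\<^esub> x)"
proof -
  interpret abelian_group M using lm_ag[OF assms(1)] .
  have "(a \<odot>\<^bsub>M\<^esub> (\<ominus>\<^bsub>M\<^esub> x)) \<oplus>\<^bsub>M\<^esub> (a \<odot>\<^bsub>M\<^esub> x) = \<zero>\<^bsub>M\<^esub>"
    using lm_rdistr[OF assms(1,2), of "\<ominus>\<^bsub>M\<^esub> x" x] assms lm_smult_zero[OF assms(1,2)]
    by (simp add: l_neg)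
  then show ?thesis using assms by (metis a_inv_closed lm_smult_closed minus_equality)
qed

lemma hom_closed: "mod_hom A M N f \<Longrightarrow> x \<in> carrier M \<Longrightarrow> f x \<in> carrier N"
  by (auto simp: mod_hom_def)
lemma hom_add: "mod_hom A M N f \<Longrightarrow> x \<in> carrier M \<Longrightarrow> y \<in> carrier M \<Longrightarrow> f (x \<oplus>\<^bsub>M\<^esub> y) = f x \<oplus>\<^bsub>N\<^esub> f y"
  by (auto simp: mod_hom_def)
lemma hom_smult: "mod_hom A M N f \<Longrightarrow> a \<in> carrier A \<Longrightarrow> x \<in> carrier M \<Longrightarrow> f (a \<odot>\<^bsub>M\<^esub> x) = a \<odot>\<^bsub>N\<^esub> f x"
  by (auto simp: mod_hom_def)

lemma hom_zero: assumes "mod_hom A M N f" "left_module A M" "left_module A N"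
  shows "f \<zero>\<^bsub>M\<^esub> = \<zero>\<^bsub>N\<^esub>"
proof -
  interpret M: abelian_group M using lm_ag[OF assms(2)] .
  interpret N: abelian_group N using lm_ag[OF assms(3)] .
  have "f \<zero>\<^bsub>M\<^esub> = f \<zero>\<^bsub>M\<^esub> \<oplus>\<^bsub>N\<^esub> f \<zero>\<^bsub>M\<^esub>"
    using hom_add[OF assms(1), of "\<zero>\<^bsub>M\<^esub>" "\<zero>\<^bsub>M\<^esub>"] by simp
  then show ?thesis using hom_closed[OF assms(1) M.zero_closed]
    by (metis N.add.l_cancel_one' )
qed

lemma hom_minus: assumes "mod_hom A M N f" "left_module A M" "left_module A N" "x \<in> carrier M"
  shows "f (\<ominus>\<^bsub>M\<^esub> x) = \<ominus>\<^bsub>N\<^esub> f x"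
proof -
  interpret M: abelian_group M using lm_ag[OF assms(2)] .
  interpret N: abelian_group N using lm_ag[OF assms(3)] .
  have "f (\<ominus>\<^bsub>M\<^esub> x) \<oplus>\<^bsub>N\<^esub> f x = \<zero>\<^bsub>N\<^esub>"
    using hom_add[OF assms(1), of "\<ominus>\<^bsub>M\<^esub> x" x] assms hom_zero[OF assms(1-3)]
    by (simp add: M.l_neg)
  then show ?thesis using assms
    by (metis M.a_inv_closed N.minus_equality hom_closed)
qed

lemma hom_diff: assumes "mod_hom A M N f" "left_module A M" "left_module A N" "x \<in> carrier M" "y \<in> carrier M"
  shows "f (x \<ominus>\<^bsub>M\<^esub> y) = f x \<ominus>\<^bsub>N\<^esub> f y"
proof -
  interpret M: abelian_group M using lm_ag[OF assms(2)] .
  interpret N: abelian_group N using lm_ag[OF assms(3)] .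
  show ?thesis using assms hom_add[OF assms(1)] hom_minus[OF assms(1-3)]
    by (simp add: M.minus_eq N.minus_eq)
qed

lemma hom_comp: "mod_hom A M N f \<Longrightarrow> mod_hom A N P g \<Longrightarrow> mod_hom A M P (\<lambda>x. g (f x))"
  unfolding mod_hom_def by (auto simp: Pi_def)

lemma hom_id: "mod_hom A M M (\<lambda>x. x)"
  unfolding mod_hom_def by auto

lemma hom_zmap: assumes "left_module A N"
  shows "mod_hom A M N (\<lambda>x. \<zero>\<^bsub>N\<^esub>)"
proof -
  interpret N: abelian_group N using lm_ag[OF assms(1)] .
  show ?thesis unfolding mod_hom_def using lm_smult_zero[OF assms] by auto
qed

lemma hom_plus: assumes "mod_hom A M N f" "mod_hom A M N g" "left_module A N"
  shows "mod_hom A M N (\<lambda>x. f x \<oplus>\<^bsub>N\<^esub> g x)"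
proof -
  interpret N: abelian_group N using lm_ag[OF assms(3)] .
  show ?thesis unfolding mod_hom_def
  proof (intro conjI ballI)
    show "(\<lambda>x. f x \<oplus>\<^bsub>N\<^esub> g x) \<in> carrier M \<rightarrow> carrier N" using assms by (auto simp: hom_closed)
  next
    fix x y assume "x \<in> carrier M" "y \<in> carrier M"
    then show "f (x \<oplus>\<^bsub>M\<^esub> y) \<oplus>\<^bsub>N\<^esub> g (x \<oplus>\<^bsub>M\<^esub> y) = f x \<oplus>\<^bsub>N\<^esub> g x \<oplus>\<^bsub>N\<^esub> (f y \<oplus>\<^bsub>N\<^esub> g y)"
      using assms by (simp add: hom_add hom_closed N.a_ac)
  next
    fix a x assume "a \<in> carrier A" "x \<in> carrier M"
    then show "f (a \<odot>\<^bsub>M\<^esub> x) \<oplus>\<^bsub>N\<^esub> g (a \<odot>\<^bsub>M\<^esub> x) = a \<odot>\<^bsub>N\<^esub> (f x \<oplus>\<^bsub>N\<^esub> g x)"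
      using assms by (simp add: hom_smult hom_closed lm_rdistr)
  qed
qed


fun rsum :: "('a,'b) module \<Rightarrow> (('a,'b) module \<times> ('b\<Rightarrow>'b) \<times> ('b\<Rightarrow>'b)) list \<Rightarrow> 'b \<Rightarrow> 'b" where
  "rsum M [] x = \<zero>\<^bsub>M\<^esub>"
| "rsum M ((Z,u,v)#ds) x = v (u x) \<oplus>\<^bsub>M\<^esub> rsum M ds x"

definition dsgood :: "'a ring \<Rightarrow> ('a,'b) module set \<Rightarrow> ('a,'b) module \<Rightarrow> (('a,'b) module \<times> ('b\<Rightarrow>'b) \<times> ('b\<Rightarrow>'b)) list \<Rightarrow> bool" where
  "dsgood A S X ds \<longleftrightarrow> (\<forall>(Z,u,v)\<in>set ds. Z \<in> S \<and> left_module A Z \<and> mod_hom A X Z u \<and> mod_hom A Z X v)"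

definition retr :: "'a ring \<Rightarrow> 'a amod set \<Rightarrow> 'a amod \<Rightarrow> bool" where
  "retr A S X \<longleftrightarrow> X \<in> Amod A \<and> (\<exists>ds. dsgood A S X ds \<and> (\<forall>x\<in>carrier X. rsum X ds x = x))"

definition cj where
  "cj a b ds = map (\<lambda>(Z,u,v). (Z, \<lambda>x. u (a x), \<lambda>z. b (v z))) ds"

lemma dsgood_Cons[simp]: "dsgood A S X ((Z,u,v)#ds) \<longleftrightarrow>
   (Z \<in> S \<and> left_module A Z \<and> mod_hom A X Z u \<and> mod_hom A Z X v) \<and> dsgood A S X ds"
  by (simp add: dsgood_def)
lemma dsgood_Nil[simp]: "dsgood A S X []"
  by (simp add: dsgood_def)
lemma dsgood_append[simp]: "dsgood A S X (ds1 @ ds2) \<longleftrightarrow> dsgood A S X ds1 \<and> dsgood A S X ds2"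
  unfolding dsgood_def by (simp only: set_append ball_Un)

lemma rsum_closed: assumes "left_module A X" "dsgood A S X ds" "x \<in> carrier X"
  shows "rsum X ds x \<in> carrier X"
  using assms(2)
proof (induction ds)
  case Nil
  interpret abelian_group X using lm_ag[OF assms(1)] .
  show ?case by simp
next
  case (Cons d ds)
  obtain Z u v where d: "d = (Z,u,v)" by (cases d) auto
  interpret abelian_group X using lm_ag[OF assms(1)] .
  have "u x \<in> carrier Z" "mod_hom A Z X v" using Cons d assms by (auto intro: hom_closed)
  then show ?case using Cons d by (simp add: hom_closed)
qed

lemma rsum_append: assumes "left_module A X" "dsgood A S X ds1" "dsgood A S X ds2" "x \<in> carrier X"
  shows "rsum X (ds1 @ ds2) x = rsum X ds1 x \<oplus>\<^bsub>X\<^esub> rsum X ds2 x"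
  using assms(2)
proof (induction ds1)
  case Nil
  interpret abelian_group X using lm_ag[OF assms(1)] .
  show ?case using rsum_closed[OF assms(1,3,4)] by simp
next
  case (Cons d ds)
  obtain Z u v where d: "d = (Z,u,v)" by (cases d) auto
  interpret abelian_group X using lm_ag[OF assms(1)] .
  show ?case using Cons d assms rsum_closed[OF assms(1)]
    by (auto simp: a_assoc hom_closed)
qed

lemma dsgood_cj: assumes "dsgood A S Y ds" "mod_hom A X Y a" "mod_hom A Y X b"
  shows "dsgood A S X (cj a b ds)"
  using assms unfolding dsgood_def cj_def by (auto intro: hom_comp)

lemma rsum_cj: assumes "left_module A X" "left_module A Y" "dsgood A S Y ds" "mod_hom A Y X b" "y \<in> carrier Y" and that: "a x' = y"
  shows "rsum X (cj a b ds) x' = b (rsum Y ds y)"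
  using assms(3)
proof (induction ds)
  case Nil
  then show ?case using hom_zero[OF assms(4,2,1)] by (simp add: cj_def)
next
  case (Cons d ds)
  obtain Z u v where d: "d = (Z,u,v)" by (cases d) auto
  have "rsum X (cj a b (d # ds)) x' = b (v (u y)) \<oplus>\<^bsub>X\<^esub> rsum X (cj a b ds) x'"
    using d that by (simp add: cj_def)
  also have "\<dots> = b (rsum Y (d#ds) y)"
  proof -
    have c: "v (u y) \<in> carrier Y" "rsum Y ds y \<in> carrier Y" using Cons d assms
      by (auto intro: hom_closed rsum_closed)
    show ?thesis using Cons d hom_add[OF assms(4) c] by simp
  qed
  finally show ?case .
qed

lemma retr_summand: assumes "retr A S Y" "X \<in> Amod A" "mod_hom A X Y i" "mod_hom A Y X p"
  "\<forall>x\<in>carrier X. p (i x) = x"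
  shows "retr A S X"
proof -
  obtain ds where ds: "dsgood A S Y ds" "\<forall>y\<in>carrier Y. rsum Y ds y = y"
    using assms(1) by (auto simp: retr_def)
  have lX: "left_module A X" "left_module A Y" using assms by (auto simp: Amod_def retr_def)
  show ?thesis unfolding retr_def
  proof (intro conjI exI[of _ "cj i p ds"] ballI)
    show "X \<in> Amod A" by fact
    show "dsgood A S X (cj i p ds)" by (rule dsgood_cj[OF ds(1) assms(3,4)])
    fix x assume x: "x \<in> carrier X"
    then show "rsum X (cj i p ds) x = x"
      using rsum_cj[OF lX ds(1) assms(4) hom_closed[OF assms(3) x], of i x] ds(2) assms(5)
        hom_closed[OF assms(3) x] by simp
  qed
qed

lemma biprod_lms: assumes "is_biprod A X Y Z" "left_module A X" "left_module A Y" "left_module A Z"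
  obtains i1 i2 p1 p2 where "mod_hom A Y X i1" "mod_hom A Z X i2" "mod_hom A X Y p1" "mod_hom A X Z p2"
     "\<forall>y\<in>carrier Y. p1 (i1 y) = y" "\<forall>z\<in>carrier Z. p2 (i2 z) = z"
     "\<forall>z\<in>carrier Z. p1 (i2 z) = \<zero>\<^bsub>Y\<^esub>" "\<forall>y\<in>carrier Y. p2 (i1 y) = \<zero>\<^bsub>Z\<^esub>"
     "\<forall>x\<in>carrier X. i1 (p1 x) \<oplus>\<^bsub>X\<^esub> i2 (p2 x) = x"
  using assms(1) unfolding is_biprod_def by blast

lemma retr_biprod: assumes "retr A S Y" "retr A S Z" "X \<in> Amod A" "is_biprod A X Y Z"
  shows "retr A S X"
proof -
  obtain ds1 where ds1: "dsgood A S Y ds1" "\<forall>y\<in>carrier Y. rsum Y ds1 y = y"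
    using assms(1) by (auto simp: retr_def)
  obtain ds2 where ds2: "dsgood A S Z ds2" "\<forall>y\<in>carrier Z. rsum Z ds2 y = y"
    using assms(2) by (auto simp: retr_def)
  have lX: "left_module A X" "left_module A Y" "left_module A Z" using assms by (auto simp: Amod_def retr_def)
  obtain i1 i2 p1 p2 where b: "mod_hom A Y X i1" "mod_hom A Z X i2" "mod_hom A X Y p1" "mod_hom A X Z p2"
     "\<forall>y\<in>carrier Y. p1 (i1 y) = y" "\<forall>z\<in>carrier Z. p2 (i2 z) = z"
     "\<forall>z\<in>carrier Z. p1 (i2 z) = \<zero>\<^bsub>Y\<^esub>" "\<forall>y\<in>carrier Y. p2 (i1 y) = \<zero>\<^bsub>Z\<^esub>"
     "\<forall>x\<in>carrier X. i1 (p1 x) \<oplus>\<^bsub>X\<^esub> i2 (p2 x) = x"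
    using biprod_lms[OF assms(4) lX] by blast
  have g1: "dsgood A S X (cj p1 i1 ds1)" by (rule dsgood_cj[OF ds1(1) b(3,1)])
  have g2: "dsgood A S X (cj p2 i2 ds2)" by (rule dsgood_cj[OF ds2(1) b(4,2)])
  show ?thesis unfolding retr_def
  proof (intro conjI exI[of _ "cj p1 i1 ds1 @ cj p2 i2 ds2"] ballI)
    show "X \<in> Amod A" by fact
    show "dsgood A S X (cj p1 i1 ds1 @ cj p2 i2 ds2)" using g1 g2 by simp
    fix x assume x: "x \<in> carrier X"
    have "rsum X (cj p1 i1 ds1 @ cj p2 i2 ds2) x = rsum X (cj p1 i1 ds1) x \<oplus>\<^bsub>X\<^esub> rsum X (cj p2 i2 ds2) x"
      by (rule rsum_append[OF lX(1) g1 g2 x])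
    also have "\<dots> = i1 (p1 x) \<oplus>\<^bsub>X\<^esub> i2 (p2 x)"
      using rsum_cj[OF lX(1,2) ds1(1) b(1) hom_closed[OF b(3) x], of p1 x]
        rsum_cj[OF lX(1,3) ds2(1) b(2) hom_closed[OF b(4) x], of p2 x]
        ds1(2) ds2(2) hom_closed[OF b(3) x] hom_closed[OF b(4) x] by simp
    also have "\<dots> = x" using b(9) x by simp
    finally show "rsum X (cj p1 i1 ds1 @ cj p2 i2 ds2) x = x" .
  qed
qed

lemma retr_zero: assumes "X \<in> Amod A" "zero_mod X" shows "retr A S X"
  using assms unfolding retr_def zero_mod_def by (intro conjI exI[of _ "[]"]) auto

lemma retr_base: assumes "X \<in> S" "S \<subseteq> Amod A" shows "retr A S X"
proof -
  have lX: "left_module A X" using assms by (auto simp: Amod_def)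
  interpret abelian_group X using lm_ag[OF lX] .
  have "dsgood A S X [(X, \<lambda>x. x, \<lambda>x. x)]" using assms lX by (simp add: hom_id)
  moreover have "\<forall>x\<in>carrier X. rsum X [(X, \<lambda>x. x, \<lambda>x. x)] x = x" by simp
  ultimately show ?thesis unfolding retr_def using assms by blast
qed

lemma dsgood_mono: "dsgood A S X ds \<Longrightarrow> S \<subseteq> S' \<Longrightarrow> dsgood A S' X ds"
  unfolding dsgood_def by fast

lemma retr_mono: "retr A S X \<Longrightarrow> S \<subseteq> S' \<Longrightarrow> retr A S' X"
  unfolding retr_def using dsgood_mono by metis

lemma retr_idem: assumes "retr A {Y. retr A S Y} X" shows "retr A S X"
proof -
  obtain ds where ds: "dsgood A {Y. retr A S Y} X ds" "\<forall>x\<in>carrier X. rsum X ds x = x"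
    and XA: "X \<in> Amod A"
    using assms by (auto simp: retr_def)
  have lX: "left_module A X" using XA by (auto simp: Amod_def)
  define sel where "sel Z = (SOME e. dsgood A S Z e \<and> (\<forall>x\<in>carrier Z. rsum Z e x = x))" for Z
  have sel: "dsgood A S Z (sel Z) \<and> (\<forall>x\<in>carrier Z. rsum Z (sel Z) x = x)" if "retr A S Z" for Z
    unfolding sel_def by (rule someI_ex) (use that in \<open>auto simp: retr_def\<close>)
  define f :: "('a amod \<times> ('a list set \<Rightarrow> 'a list set) \<times> ('a list set \<Rightarrow> 'a list set)) list \<Rightarrow> _"
    where "f ds = concat (map (\<lambda>(Z,u,v). cj u v (sel Z)) ds)" for ds
  have "dsgood A S X (f ds') \<and> (\<forall>x\<in>carrier X. rsum X (f ds') x = rsum X ds' x)"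
    if "dsgood A {Y. retr A S Y} X ds'" for ds'
    using that
  proof (induction ds')
    case Nil
    then show ?case by (simp add: f_def)
  next
    case (Cons d ds')
    obtain Z u v where d: "d = (Z,u,v)" by (cases d) auto
    have Z: "retr A S Z" "left_module A Z" "mod_hom A X Z u" "mod_hom A Z X v" using Cons d by auto
    have fc: "f (d # ds') = cj u v (sel Z) @ f ds'" using d by (simp add: f_def)
    have g: "dsgood A S X (cj u v (sel Z))" using dsgood_cj[OF conjunct1[OF sel[OF Z(1)]] Z(3,4)] .
    have IH: "dsgood A S X (f ds')" "\<forall>x\<in>carrier X. rsum X (f ds') x = rsum X ds' x" using Cons d by auto
    show ?case
    proof (intro conjI ballI)
      show "dsgood A S X (f (d # ds'))" using fc g IH by simp
      fix x assume x: "x \<in> carrier X"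
      have "rsum X (f (d # ds')) x = rsum X (cj u v (sel Z)) x \<oplus>\<^bsub>X\<^esub> rsum X (f ds') x"
        using fc rsum_append[OF lX g IH(1) x] by simp
      also have "rsum X (cj u v (sel Z)) x = v (u x)"
        using rsum_cj[OF lX Z(2) conjunct1[OF sel[OF Z(1)]] Z(4) hom_closed[OF Z(3) x], of u x]
          sel[OF Z(1)] hom_closed[OF Z(3) x] by simp
      finally show "rsum X (f (d # ds')) x = rsum X (d # ds') x" using IH x d by simp
    qed
  qed
  then have "dsgood A S X (f ds)" "\<forall>x\<in>carrier X. rsum X (f ds) x = rsum X ds x"
    using ds(1) by blast+
  then show ?thesis unfolding retr_def using ds(2) XA by (intro conjI exI[of _ "f ds"]) auto
qed


definition gb :: "'a ring \<Rightarrow> ('a,'b) module \<Rightarrow> 'b set \<Rightarrow> 'b \<Rightarrow> bool" where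
  "gb A M S x \<longleftrightarrow> (\<exists>f\<in>S \<rightarrow> carrier A. x = finsum M (\<lambda>s. f s \<odot>\<^bsub>M\<^esub> s) S)"

lemma gb_zero: assumes "left_module A M" "S \<subseteq> carrier M"
  shows "gb A M S \<zero>\<^bsub>M\<^esub>"
proof -
  interpret abelian_group M using lm_ag[OF assms(1)] .
  interpret R: ring A using lm_ring[OF assms(1)] .
  have "finsum M (\<lambda>s. \<zero>\<^bsub>A\<^esub> \<odot>\<^bsub>M\<^esub> s) S = finsum M (\<lambda>s. \<zero>\<^bsub>M\<^esub>) S"
    by (rule finsum_cong') (use assms lm_zero_smult[OF assms(1)] in auto)
  then show ?thesis unfolding gb_def by (intro bexI[of _ "\<lambda>_. \<zero>\<^bsub>A\<^esub>"]) auto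
qed

lemma gb_add: assumes "left_module A M" "S \<subseteq> carrier M" "gb A M S x" "gb A M S y"
  shows "gb A M S (x \<oplus>\<^bsub>M\<^esub> y)"
proof -
  interpret abelian_group M using lm_ag[OF assms(1)] .
  interpret R: ring A using lm_ring[OF assms(1)] .
  obtain f g where f: "f \<in> S \<rightarrow> carrier A" "x = finsum M (\<lambda>s. f s \<odot>\<^bsub>M\<^esub> s) S"
    and g: "g \<in> S \<rightarrow> carrier A" "y = finsum M (\<lambda>s. g s \<odot>\<^bsub>M\<^esub> s) S"
    using assms(3,4) unfolding gb_def by blast
  have fA: "\<And>s. s \<in> S \<Longrightarrow> f s \<in> carrier A" "\<And>s. s \<in> S \<Longrightarrow> g s \<in> carrier A"
    "\<And>s. s \<in> S \<Longrightarrow> s \<in> carrier M" using f g assms by auto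
  have "finsum M (\<lambda>s. (f s \<oplus>\<^bsub>A\<^esub> g s) \<odot>\<^bsub>M\<^esub> s) S = finsum M (\<lambda>s. f s \<odot>\<^bsub>M\<^esub> s \<oplus>\<^bsub>M\<^esub> g s \<odot>\<^bsub>M\<^esub> s) S"
    by (rule finsum_cong') (use fA lm_ldistr[OF assms(1)] assms(1) in auto)
  also have "\<dots> = x \<oplus>\<^bsub>M\<^esub> y" using f g assms by (subst finsum_addf) auto
  finally show ?thesis unfolding gb_def using f g
    by (intro bexI[of _ "\<lambda>s. f s \<oplus>\<^bsub>A\<^esub> g s"]) auto
qed

lemma gb_single: assumes "left_module A M" "S \<subseteq> carrier M" "finite S" "t \<in> S" "a \<in> carrier A"
  shows "gb A M S (a \<odot>\<^bsub>M\<^esub> t)"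
proof -
  interpret abelian_group M using lm_ag[OF assms(1)] .
  interpret R: ring A using lm_ring[OF assms(1)] .
  have "finsum M (\<lambda>s. (if t = s then a else \<zero>\<^bsub>A\<^esub>) \<odot>\<^bsub>M\<^esub> s) S
      = finsum M (\<lambda>s. if t = s then a \<odot>\<^bsub>M\<^esub> s else \<zero>\<^bsub>M\<^esub>) S"
    by (rule finsum_cong') (use assms lm_zero_smult[OF assms(1)] in auto)
  also have "\<dots> = a \<odot>\<^bsub>M\<^esub> t"
    by (rule add.finprod_singleton) (use assms in auto)
  finally show ?thesis unfolding gb_def using assms
    by (intro bexI[of _ "\<lambda>s. if t = s then a else \<zero>\<^bsub>A\<^esub>"]) auto
qed

lemma gb_mono: assumes "left_module A M" "S' \<subseteq> carrier M" "finite S'" "S \<subseteq> S'" "gb A M S x"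
  shows "gb A M S' x"
proof -
  interpret abelian_group M using lm_ag[OF assms(1)] .
  interpret R: ring A using lm_ring[OF assms(1)] .
  obtain f where f: "f \<in> S \<rightarrow> carrier A" "x = finsum M (\<lambda>s. f s \<odot>\<^bsub>M\<^esub> s) S"
    using assms unfolding gb_def by blast
  define f' where "f' s = (if s \<in> S then f s else \<zero>\<^bsub>A\<^esub>)" for s
  have f': "f' \<in> S' \<rightarrow> carrier A" using f by (auto simp: f'_def)
  have fS: "finite S" "finite (S' - S)" using assms finite_subset by auto
  have "finsum M (\<lambda>s. f' s \<odot>\<^bsub>M\<^esub> s) S' = finsum M (\<lambda>s. f' s \<odot>\<^bsub>M\<^esub> s) (S \<union> (S' - S))"
    using assms by (simp add: Un_absorb1)
  also have "\<dots> = finsum M (\<lambda>s. f' s \<odot>\<^bsub>M\<^esub> s) S \<oplus>\<^bsub>M\<^esub> finsum M (\<lambda>s. f' s \<odot>\<^bsub>M\<^esub> s) (S' - S)"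
    by (rule finsum_Un_disjoint) (use fS f' assms in auto)
  also have "finsum M (\<lambda>s. f' s \<odot>\<^bsub>M\<^esub> s) S = x"
    unfolding f(2) by (rule finsum_cong') (use f assms in \<open>auto simp: f'_def\<close>)
  also have "finsum M (\<lambda>s. f' s \<odot>\<^bsub>M\<^esub> s) (S' - S) = finsum M (\<lambda>s. \<zero>\<^bsub>M\<^esub>) (S' - S)"
    by (rule finsum_cong') (use assms lm_zero_smult[OF assms(1)] in \<open>auto simp: f'_def\<close>)
  also have "x \<oplus>\<^bsub>M\<^esub> finsum M (\<lambda>s. \<zero>\<^bsub>M\<^esub>) (S' - S) = x"
  proof -
    have "x \<in> carrier M" unfolding f(2) using f assms by (intro finsum_closed) auto
    then show ?thesis by simp
  qed
  finally show ?thesis unfolding gb_def using f' by blast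
qed

lemma hom_finsum: assumes "mod_hom A M N g" "left_module A M" "left_module A N" "finite S" "h \<in> S \<rightarrow> carrier M"
  shows "g (finsum M h S) = finsum N (\<lambda>s. g (h s)) S"
  using assms(4,5)
proof (induction S rule: finite_induct)
  case empty
  interpret abelian_group M using lm_ag[OF assms(2)] .
  interpret N: abelian_group N using lm_ag[OF assms(3)] .
  show ?case using hom_zero[OF assms(1-3)] by simp
next
  case (insert s S)
  interpret abelian_group M using lm_ag[OF assms(2)] .
  interpret N: abelian_group N using lm_ag[OF assms(3)] .
  have "g (finsum M h (insert s S)) = g (h s \<oplus>\<^bsub>M\<^esub> finsum M h S)" using insert by simp
  also have "\<dots> = g (h s) \<oplus>\<^bsub>N\<^esub> g (finsum M h S)" using insert by (intro hom_add[OF assms(1)]) auto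
  also have "\<dots> = finsum N (\<lambda>s. g (h s)) (insert s S)" using insert assms(1)
    by (subst N.finsum_insert) (auto intro: hom_closed)
  finally show ?case .
qed

lemma gb_hom: assumes "mod_hom A M N g" "left_module A M" "left_module A N" "finite S" "S \<subseteq> carrier M"
  "gb A M S x"
  shows "gb A N (g ` S) (g x)"
proof -
  interpret abelian_group M using lm_ag[OF assms(2)] .
  interpret N: abelian_group N using lm_ag[OF assms(3)] .
  obtain f where f: "f \<in> S \<rightarrow> carrier A" "x = finsum M (\<lambda>s. f s \<odot>\<^bsub>M\<^esub> s) S"
    using assms unfolding gb_def by blast
  have fA: "\<And>s. s \<in> S \<Longrightarrow> f s \<in> carrier A" 
    "\<And>s. s \<in> S \<Longrightarrow> s \<in> carrier M" using f assms by auto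
  have gS: "g ` S \<subseteq> carrier N" "finite (g ` S)" using assms by (auto intro: hom_closed)
  have gx: "g x = finsum N (\<lambda>s. f s \<odot>\<^bsub>N\<^esub> g s) S"
  proof -
    have "g x = finsum N (\<lambda>s. g (f s \<odot>\<^bsub>M\<^esub> s)) S"
      unfolding f(2) by (rule hom_finsum[OF assms(1-4)]) (use fA assms(2) in auto)
    also have "\<dots> = finsum N (\<lambda>s. f s \<odot>\<^bsub>N\<^esub> g s) S"
    proof (rule N.finsum_cong')
      show "(\<lambda>s. f s \<odot>\<^bsub>N\<^esub> g s) \<in> S \<rightarrow> carrier N"
        using fA assms(3) hom_closed[OF assms(1)] by auto
      fix s assume "s \<in> S"
      then show "g (f s \<odot>\<^bsub>M\<^esub> s) = f s \<odot>\<^bsub>N\<^esub> g s" using fA hom_smult[OF assms(1)] by auto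
    qed simp
    finally show ?thesis .
  qed
  have "\<forall>S0. S0 \<subseteq> S \<longrightarrow> gb A N (g ` S) (finsum N (\<lambda>s. f s \<odot>\<^bsub>N\<^esub> g s) S0)"
  proof (intro allI impI)
    fix S0 assume "S0 \<subseteq> S"
    then show "gb A N (g ` S) (finsum N (\<lambda>s. f s \<odot>\<^bsub>N\<^esub> g s) S0)"
    proof (induction S0 rule: infinite_finite_induct)
      case (infinite S0) then show ?case using assms finite_subset by blast
    next
      case empty then show ?case using gb_zero[OF assms(3) gS(1)] by simp
    next
      case (insert s S0)
      have c: "(\<lambda>s. f s \<odot>\<^bsub>N\<^esub> g s) \<in> S0 \<rightarrow> carrier N" "f s \<odot>\<^bsub>N\<^esub> g s \<in> carrier N"
        using insert fA assms(3) hom_closed[OF assms(1)] by auto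
      have "finsum N (\<lambda>s. f s \<odot>\<^bsub>N\<^esub> g s) (insert s S0) = f s \<odot>\<^bsub>N\<^esub> g s \<oplus>\<^bsub>N\<^esub> finsum N (\<lambda>s. f s \<odot>\<^bsub>N\<^esub> g s) S0"
        using insert c by simp
      moreover have "gb A N (g ` S) (f s \<odot>\<^bsub>N\<^esub> g s)"
        using insert f gS by (intro gb_single[OF assms(3)]) auto
      ultimately show ?case using insert gb_add[OF assms(3) gS(1)] by simp
    qed
  qed
  then show ?thesis using gx by auto
qed

lemma fin_gen_image: assumes "mod_hom A M N g" "left_module A M" "left_module A N" "fin_gen A M"
   "g ` carrier M = carrier N"
  shows "fin_gen A N"
proof -
  obtain S where S: "finite S" "S \<subseteq> carrier M" "\<forall>x\<in>carrier M. gb A M S x"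
    using assms(4) unfolding fin_gen_def gb_def by blast
  have "\<forall>y\<in>carrier N. gb A N (g ` S) y" using gb_hom[OF assms(1-3) S(1,2)] S(3) assms(5) by force
  moreover have "finite (g ` S)" "g ` S \<subseteq> carrier N" using S assms by (auto intro: hom_closed)
  ultimately show ?thesis unfolding fin_gen_def gb_def by blast
qed

lemma fin_gen_biprod: assumes "is_biprod A X Y Z" "left_module A X" "left_module A Y" "left_module A Z"
  "fin_gen A Y" "fin_gen A Z"
  shows "fin_gen A X"
proof -
  interpret abelian_group X using lm_ag[OF assms(2)] .
  obtain i1 i2 p1 p2 where b: "mod_hom A Y X i1" "mod_hom A Z X i2" "mod_hom A X Y p1" "mod_hom A X Z p2"
     "\<forall>x\<in>carrier X. i1 (p1 x) \<oplus>\<^bsub>X\<^esub> i2 (p2 x) = x"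
    using biprod_lms[OF assms(1-4)] by metis
  obtain S1 where S1: "finite S1" "S1 \<subseteq> carrier Y" "\<forall>x\<in>carrier Y. gb A Y S1 x"
    using assms(5) unfolding fin_gen_def gb_def by blast
  obtain S2 where S2: "finite S2" "S2 \<subseteq> carrier Z" "\<forall>x\<in>carrier Z. gb A Z S2 x"
    using assms(6) unfolding fin_gen_def gb_def by blast
  define S where "S = i1 ` S1 \<union> i2 ` S2"
  have S: "finite S" "S \<subseteq> carrier X" using S1 S2 b by (auto simp: S_def intro: hom_closed)
  have "gb A X S x" if x: "x \<in> carrier X" for x
  proof -
    have "gb A X (i1 ` S1) (i1 (p1 x))" using gb_hom[OF b(1) assms(3,2) S1(1,2)] S1(3) b(3) x hom_closed by metis
    then have 1: "gb A X S (i1 (p1 x))" using gb_mono[OF assms(2) S(2,1)] by (auto simp: S_def)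
    have "gb A X (i2 ` S2) (i2 (p2 x))" using gb_hom[OF b(2) assms(4,2) S2(1,2)] S2(3) b(4) x hom_closed by metis
    then have 2: "gb A X S (i2 (p2 x))" using gb_mono[OF assms(2) S(2,1)] by (auto simp: S_def)
    show ?thesis using gb_add[OF assms(2) S(2) 1 2] b(5) x by simp
  qed
  then show ?thesis using S unfolding fin_gen_def gb_def by blast
qed


definition zmod :: "'a amod" where
  "zmod = \<lparr>carrier = {{}}, mult = (\<lambda>_ _. {}), one = {}, zero = {}, add = (\<lambda>_ _. {}), smult = (\<lambda>_ _. {})\<rparr>"

lemma zmod_Amod: assumes "ring A" shows "zmod \<in> Amod A" "zero_mod zmod"
proof -
  have ag: "abelian_group zmod" by (rule abelian_groupI) (auto simp: zmod_def)
  have lm: "left_module A zmod" unfolding left_module_def using assms ag by (auto simp: zmod_def)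
  interpret abelian_group zmod by (rule ag)
  have e: "\<And>f. finsum zmod f {} = {}" by (simp only: finsum_empty) (simp add: zmod_def)
  have "fin_gen A zmod" unfolding fin_gen_def
    by (intro exI[of _ "{}"]) (simp add: e, simp add: zmod_def)
  then show "zmod \<in> Amod A" using lm by (simp add: Amod_def)
  show "zero_mod zmod" by (simp add: zero_mod_def zmod_def)
qed

lemma ex_zero: assumes "ring A" shows "\<exists>Z. Z \<in> Amod A \<and> zero_mod Z"
  using zmod_Amod[OF assms] by blast

lemma sub_lm: assumes "left_module A W" "K \<subseteq> carrier W" "\<zero>\<^bsub>W\<^esub> \<in> K"
  "\<And>x y. x \<in> K \<Longrightarrow> y \<in> K \<Longrightarrow> x \<oplus>\<^bsub>W\<^esub> y \<in> K"
  "\<And>x. x \<in> K \<Longrightarrow> \<ominus>\<^bsub>W\<^esub> x \<in> K"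
  "\<And>a x. a \<in> carrier A \<Longrightarrow> x \<in> K \<Longrightarrow> a \<odot>\<^bsub>W\<^esub> x \<in> K"
  shows "left_module A (W\<lparr>carrier := K\<rparr>)"
proof -
  interpret abelian_group W using lm_ag[OF assms(1)] .
  have ag: "abelian_group (W\<lparr>carrier := K\<rparr>)"
  proof (rule abelian_groupI, simp_all)
    show "\<And>x y. x \<in> K \<Longrightarrow> y \<in> K \<Longrightarrow> x \<oplus>\<^bsub>W\<^esub> y \<in> K" by (rule assms(4))
    show "\<zero>\<^bsub>W\<^esub> \<in> K" by fact
    show "\<And>x y z. x \<in> K \<Longrightarrow> y \<in> K \<Longrightarrow> z \<in> K \<Longrightarrow> x \<oplus>\<^bsub>W\<^esub> y \<oplus>\<^bsub>W\<^esub> z = x \<oplus>\<^bsub>W\<^esub> (y \<oplus>\<^bsub>W\<^esub> z)"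
      using assms(2) by (auto intro: a_assoc)
    show "\<And>x y. x \<in> K \<Longrightarrow> y \<in> K \<Longrightarrow> x \<oplus>\<^bsub>W\<^esub> y = y \<oplus>\<^bsub>W\<^esub> x"
      using assms(2) by (auto intro: a_comm)
    show "\<And>x. x \<in> K \<Longrightarrow> \<zero>\<^bsub>W\<^esub> \<oplus>\<^bsub>W\<^esub> x = x" using assms(2) by auto
    show "\<And>x. x \<in> K \<Longrightarrow> \<exists>y\<in>K. y \<oplus>\<^bsub>W\<^esub> x = \<zero>\<^bsub>W\<^esub>"
      using assms(2,5) by (metis l_neg subsetD)
  qed
  show ?thesis unfolding left_module_def using ag assms(1,2,6)
    by (auto simp: left_module_def subset_iff)
qed

lemma split_biprod: assumes "X \<in> Amod A" "W \<in> Amod A" "mod_hom A X W i" "mod_hom A W X p"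
  "\<forall>x\<in>carrier X. p (i x) = x"
  shows "\<exists>Z\<in>Amod A. is_biprod A W X Z"
proof -
  have lX: "left_module A X" and lW: "left_module A W" and fW: "fin_gen A W"
    using assms by (auto simp: Amod_def)
  interpret X: abelian_group X using lm_ag[OF lX] .
  interpret W: abelian_group W using lm_ag[OF lW] .
  define K where "K = {w \<in> carrier W. p w = \<zero>\<^bsub>X\<^esub>}"
  define Z where "Z = W\<lparr>carrier := K\<rparr>"
  define q where "q w = w \<ominus>\<^bsub>W\<^esub> i (p w)" for w
  have ic: "\<And>x. x \<in> carrier X \<Longrightarrow> i x \<in> carrier W" and pc: "\<And>w. w \<in> carrier W \<Longrightarrow> p w \<in> carrier X"
    using assms hom_closed by metis+
  have p0: "p \<zero>\<^bsub>W\<^esub> = \<zero>\<^bsub>X\<^esub>" and i0: "i \<zero>\<^bsub>X\<^esub> = \<zero>\<^bsub>W\<^esub>" using hom_zero assms lX lW by metis+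
  have lZ: "left_module A Z" unfolding Z_def
  proof (rule sub_lm[OF lW])
    show "K \<subseteq> carrier W" by (auto simp: K_def)
    show "\<zero>\<^bsub>W\<^esub> \<in> K" using p0 by (auto simp: K_def)
    show "\<And>x y. x \<in> K \<Longrightarrow> y \<in> K \<Longrightarrow> x \<oplus>\<^bsub>W\<^esub> y \<in> K"
      using hom_add[OF assms(4)] by (auto simp: K_def)
    show "\<And>x. x \<in> K \<Longrightarrow> \<ominus>\<^bsub>W\<^esub> x \<in> K"
      using hom_minus[OF assms(4) lW lX] by (auto simp: K_def)
    show "\<And>a x. a \<in> carrier A \<Longrightarrow> x \<in> K \<Longrightarrow> a \<odot>\<^bsub>W\<^esub> x \<in> K"
      using hom_smult[OF assms(4)] lm_smult_zero[OF lX] lW by (auto simp: K_def)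
  qed
  have qc: "q w \<in> K" if "w \<in> carrier W" for w
  proof -
    have "p (q w) = p w \<ominus>\<^bsub>X\<^esub> p (i (p w))" unfolding q_def
      using hom_diff[OF assms(4) lW lX] that ic pc by simp
    also have "\<dots> = \<zero>\<^bsub>X\<^esub>" using assms(5) pc that by (simp add: X.r_neg X.minus_eq)
    finally show ?thesis using that ic pc by (simp add: K_def q_def)
  qed
  have hq: "mod_hom A W Z q" unfolding mod_hom_def
  proof (intro conjI ballI)
    show "q \<in> carrier W \<rightarrow> carrier Z" using qc by (auto simp: Z_def)
    fix x y assume xy: "x \<in> carrier W" "y \<in> carrier W"
    have "q (x \<oplus>\<^bsub>W\<^esub> y) = (x \<oplus>\<^bsub>W\<^esub> y) \<ominus>\<^bsub>W\<^esub> (i (p x) \<oplus>\<^bsub>W\<^esub> i (p y))"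
      unfolding q_def using xy hom_add[OF assms(4)] hom_add[OF assms(3)] pc by simp
    also have "\<dots> = q x \<oplus>\<^bsub>W\<^esub> q y" unfolding q_def using xy ic pc
      by (simp add: W.minus_eq W.minus_add W.a_ac)
    finally show "q (x \<oplus>\<^bsub>W\<^esub> y) = q x \<oplus>\<^bsub>Z\<^esub> q y" by (simp add: Z_def)
  next
    fix a x assume ax: "a \<in> carrier A" "x \<in> carrier W"
    have "q (a \<odot>\<^bsub>W\<^esub> x) = a \<odot>\<^bsub>W\<^esub> x \<ominus>\<^bsub>W\<^esub> a \<odot>\<^bsub>W\<^esub> i (p x)"
      unfolding q_def using ax hom_smult[OF assms(4)] hom_smult[OF assms(3)] pc by simp
    also have "\<dots> = a \<odot>\<^bsub>W\<^esub> q x" unfolding q_def using ax ic pc lW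
      by (simp add: W.minus_eq lm_rdistr lm_smult_minus)
    finally show "q (a \<odot>\<^bsub>W\<^esub> x) = a \<odot>\<^bsub>Z\<^esub> q x" by (simp add: Z_def)
  qed
  have hj: "mod_hom A Z W (\<lambda>z. z)" unfolding mod_hom_def by (auto simp: Z_def K_def)
  have qsurj: "q ` carrier W = carrier Z"
  proof
    show "q ` carrier W \<subseteq> carrier Z" using qc by (auto simp: Z_def)
    show "carrier Z \<subseteq> q ` carrier W"
    proof
      fix z assume "z \<in> carrier Z"
      then have z: "z \<in> carrier W" "p z = \<zero>\<^bsub>X\<^esub>" by (auto simp: Z_def K_def)
      then have "q z = z" unfolding q_def using i0 by (simp add: W.minus_eq)
      then show "z \<in> q ` carrier W" using z by force
    qed
  qed
  have fZ: "fin_gen A Z" by (rule fin_gen_image[OF hq lW lZ fW qsurj])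
  have "is_biprod A W X Z" unfolding is_biprod_def
  proof (intro exI conjI)
    show "mod_hom A X W i" "mod_hom A Z W (\<lambda>z. z)" "mod_hom A W X p" "mod_hom A W Z q" by fact+
    show "\<forall>y\<in>carrier X. p (i y) = y" by fact
    show "\<forall>z\<in>carrier Z. q z = z" using i0 by (auto simp: Z_def K_def q_def W.minus_eq)
    show "\<forall>z\<in>carrier Z. p z = \<zero>\<^bsub>X\<^esub>" by (auto simp: Z_def K_def)
    show "\<forall>y\<in>carrier X. q (i y) = \<zero>\<^bsub>Z\<^esub>" using assms(5) ic by (auto simp: Z_def q_def W.r_neg W.minus_eq)
    show "\<forall>x\<in>carrier W. i (p x) \<oplus>\<^bsub>W\<^esub> q x = x" using ic pc
      by (auto simp: q_def W.minus_eq W.a_ac W.r_neg)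
  qed
  then show ?thesis using lZ fZ by (auto simp: Amod_def intro!: bexI[of _ Z])
qed


definition e1 :: "'a list \<Rightarrow> 'a list" where "e1 l = l @ l"
definition e2 :: "'a list \<Rightarrow> 'a list" where "e2 l = undefined # l @ l"
definition enc :: "'a list set \<Rightarrow> 'a list set \<Rightarrow> 'a list set" where "enc y z = e1 ` y \<union> e2 ` z"
definition d1 :: "'a list set \<Rightarrow> 'a list set" where "d1 S = {l. e1 l \<in> S}"
definition d2 :: "'a list set \<Rightarrow> 'a list set" where "d2 S = {l. e2 l \<in> S}"

lemma e1_inj: "e1 l = e1 m \<longleftrightarrow> l = m"
proof
  assume h: "e1 l = e1 m"
  then have "length (l @ l) = length (m @ m)" by (simp add: e1_def)
  then have "length l = length m" by simp
  then show "l = m" using h by (simp add: e1_def)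
qed simp
lemma e2_inj: "e2 l = e2 m \<longleftrightarrow> l = m"
  using e1_inj by (auto simp: e1_def e2_def)
lemma e12: "e1 l \<noteq> e2 m"
proof
  assume "e1 l = e2 m"
  then have "length (e1 l) = length (e2 m)" by simp
  then show False by (simp add: e1_def e2_def) presburger
qed

lemma d1_enc[simp]: "d1 (enc y z) = y"
  by (auto simp: d1_def enc_def e1_inj e12 e12[symmetric])
lemma d2_enc[simp]: "d2 (enc y z) = z"
  by (auto simp: d2_def enc_def e2_inj e12 e12[symmetric])

definition dsm :: "'a amod \<Rightarrow> 'a amod \<Rightarrow> 'a amod" where
  "dsm M N = \<lparr>carrier = (\<lambda>(y,z). enc y z) ` (carrier M \<times> carrier N), mult = (\<lambda>_ _. {}), one = {},
     zero = enc \<zero>\<^bsub>M\<^esub> \<zero>\<^bsub>N\<^esub>,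
     add = (\<lambda>u v. enc (d1 u \<oplus>\<^bsub>M\<^esub> d1 v) (d2 u \<oplus>\<^bsub>N\<^esub> d2 v)),
     smult = (\<lambda>a u. enc (a \<odot>\<^bsub>M\<^esub> d1 u) (a \<odot>\<^bsub>N\<^esub> d2 u))\<rparr>"

lemma dsm_carrier: "u \<in> carrier (dsm M N) \<longleftrightarrow> (\<exists>y\<in>carrier M. \<exists>z\<in>carrier N. u = enc y z)"
  by (auto simp: dsm_def)
lemma dsm_enc_mem[simp]: "enc y z \<in> carrier (dsm M N) \<longleftrightarrow> y \<in> carrier M \<and> z \<in> carrier N"
  by (auto simp: dsm_carrier) (metis d1_enc d2_enc)+
lemma dsm_ops[simp]: "\<zero>\<^bsub>dsm M N\<^esub> = enc \<zero>\<^bsub>M\<^esub> \<zero>\<^bsub>N\<^esub>"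
  "enc y z \<oplus>\<^bsub>dsm M N\<^esub> enc y' z' = enc (y \<oplus>\<^bsub>M\<^esub> y') (z \<oplus>\<^bsub>N\<^esub> z')"
  "a \<odot>\<^bsub>dsm M N\<^esub> enc y z = enc (a \<odot>\<^bsub>M\<^esub> y) (a \<odot>\<^bsub>N\<^esub> z)"
  by (auto simp: dsm_def)

lemma dsm_cases: assumes "u \<in> carrier (dsm M N)"
  obtains y z where "y \<in> carrier M" "z \<in> carrier N" "u = enc y z"
  using assms by (auto simp: dsm_carrier)

lemma dsm_lm: assumes "left_module A M" "left_module A N"
  shows "left_module A (dsm M N)"
proof -
  interpret M: abelian_group M using lm_ag[OF assms(1)] .
  interpret N: abelian_group N using lm_ag[OF assms(2)] .
  have ag: "abelian_group (dsm M N)"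
  proof (rule abelian_groupI)
    show "\<zero>\<^bsub>dsm M N\<^esub> \<in> carrier (dsm M N)" by simp
    show "\<And>x y. x \<in> carrier (dsm M N) \<Longrightarrow> y \<in> carrier (dsm M N) \<Longrightarrow> x \<oplus>\<^bsub>dsm M N\<^esub> y \<in> carrier (dsm M N)"
      by (auto elim!: dsm_cases)
    show "\<And>x y z. x \<in> carrier (dsm M N) \<Longrightarrow> y \<in> carrier (dsm M N) \<Longrightarrow> z \<in> carrier (dsm M N) \<Longrightarrow> x \<oplus>\<^bsub>dsm M N\<^esub> y \<oplus>\<^bsub>dsm M N\<^esub> z = x \<oplus>\<^bsub>dsm M N\<^esub> (y \<oplus>\<^bsub>dsm M N\<^esub> z)"
      by (auto elim!: dsm_cases simp: M.a_assoc N.a_assoc)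
    show "\<And>x y. x \<in> carrier (dsm M N) \<Longrightarrow> y \<in> carrier (dsm M N) \<Longrightarrow> x \<oplus>\<^bsub>dsm M N\<^esub> y = y \<oplus>\<^bsub>dsm M N\<^esub> x"
      by (auto elim!: dsm_cases simp: M.a_comm N.a_comm)
    show "\<And>x. x \<in> carrier (dsm M N) \<Longrightarrow> \<zero>\<^bsub>dsm M N\<^esub> \<oplus>\<^bsub>dsm M N\<^esub> x = x"
      by (auto elim!: dsm_cases)
    fix x assume "x \<in> carrier (dsm M N)"
    then obtain x1 x2 where c: "x1 \<in> carrier M" "x2 \<in> carrier N" "x = enc x1 x2" by (auto elim!: dsm_cases)
    show "\<exists>y\<in>carrier (dsm M N). y \<oplus>\<^bsub>dsm M N\<^esub> x = \<zero>\<^bsub>dsm M N\<^esub>"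
      using c by (intro bexI[of _ "enc (\<ominus>\<^bsub>M\<^esub> x1) (\<ominus>\<^bsub>N\<^esub> x2)"]) (simp_all add: M.l_neg N.l_neg)
  qed
  have H: "\<forall>a\<in>carrier A. \<forall>b\<in>carrier A. \<forall>x\<in>carrier (dsm M N). \<forall>y\<in>carrier (dsm M N).
    a \<odot>\<^bsub>dsm M N\<^esub> x \<in> carrier (dsm M N) \<and>
    (a \<oplus>\<^bsub>A\<^esub> b) \<odot>\<^bsub>dsm M N\<^esub> x = a \<odot>\<^bsub>dsm M N\<^esub> x \<oplus>\<^bsub>dsm M N\<^esub> b \<odot>\<^bsub>dsm M N\<^esub> x \<and>
    a \<odot>\<^bsub>dsm M N\<^esub> (x \<oplus>\<^bsub>dsm M N\<^esub> y) = a \<odot>\<^bsub>dsm M N\<^esub> x \<oplus>\<^bsub>dsm M N\<^esub> a \<odot>\<^bsub>dsm M N\<^esub> y \<and>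
    (a \<otimes>\<^bsub>A\<^esub> b) \<odot>\<^bsub>dsm M N\<^esub> x = a \<odot>\<^bsub>dsm M N\<^esub> (b \<odot>\<^bsub>dsm M N\<^esub> x) \<and>
    \<one>\<^bsub>A\<^esub> \<odot>\<^bsub>dsm M N\<^esub> x = x"
  proof (intro ballI)
    fix a b x y assume a: "a \<in> carrier A" and b: "b \<in> carrier A" and x: "x \<in> carrier (dsm M N)"
      and y: "y \<in> carrier (dsm M N)"
    obtain x1 x2 y1 y2 where c: "x1 \<in> carrier M" "x2 \<in> carrier N" "y1 \<in> carrier M" "y2 \<in> carrier N"
       and e: "x = enc x1 x2" "y = enc y1 y2"
      using x y by (auto elim!: dsm_cases)
    show "a \<odot>\<^bsub>dsm M N\<^esub> x \<in> carrier (dsm M N) \<and>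
    (a \<oplus>\<^bsub>A\<^esub> b) \<odot>\<^bsub>dsm M N\<^esub> x = a \<odot>\<^bsub>dsm M N\<^esub> x \<oplus>\<^bsub>dsm M N\<^esub> b \<odot>\<^bsub>dsm M N\<^esub> x \<and>
    a \<odot>\<^bsub>dsm M N\<^esub> (x \<oplus>\<^bsub>dsm M N\<^esub> y) = a \<odot>\<^bsub>dsm M N\<^esub> x \<oplus>\<^bsub>dsm M N\<^esub> a \<odot>\<^bsub>dsm M N\<^esub> y \<and>
    (a \<otimes>\<^bsub>A\<^esub> b) \<odot>\<^bsub>dsm M N\<^esub> x = a \<odot>\<^bsub>dsm M N\<^esub> (b \<odot>\<^bsub>dsm M N\<^esub> x) \<and>
    \<one>\<^bsub>A\<^esub> \<odot>\<^bsub>dsm M N\<^esub> x = x"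
      using a b c e assms by (simp add: lm_ldistr lm_rdistr lm_assoc lm_one)
  qed
  show ?thesis unfolding left_module_def
  proof (intro conjI ag lm_ring[OF assms(1)] ballI)
    fix a x assume "a \<in> carrier A" "x \<in> carrier (dsm M N)"
    then show "a \<odot>\<^bsub>dsm M N\<^esub> x \<in> carrier (dsm M N)" using H by simp
  next
    fix a b x assume "a \<in> carrier A" "b \<in> carrier A" "x \<in> carrier (dsm M N)"
    then show "(a \<oplus>\<^bsub>A\<^esub> b) \<odot>\<^bsub>dsm M N\<^esub> x = a \<odot>\<^bsub>dsm M N\<^esub> x \<oplus>\<^bsub>dsm M N\<^esub> b \<odot>\<^bsub>dsm M N\<^esub> x"
      using H by simp
  next
    fix a x y assume "a \<in> carrier A" "x \<in> carrier (dsm M N)" "y \<in> carrier (dsm M N)"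
    then show "a \<odot>\<^bsub>dsm M N\<^esub> (x \<oplus>\<^bsub>dsm M N\<^esub> y) = a \<odot>\<^bsub>dsm M N\<^esub> x \<oplus>\<^bsub>dsm M N\<^esub> a \<odot>\<^bsub>dsm M N\<^esub> y"
      using H by simp
  next
    fix a b x assume "a \<in> carrier A" "b \<in> carrier A" "x \<in> carrier (dsm M N)"
    then show "(a \<otimes>\<^bsub>A\<^esub> b) \<odot>\<^bsub>dsm M N\<^esub> x = a \<odot>\<^bsub>dsm M N\<^esub> (b \<odot>\<^bsub>dsm M N\<^esub> x)"
      using H by simp
  next
    fix x assume "x \<in> carrier (dsm M N)"
    then show "\<one>\<^bsub>A\<^esub> \<odot>\<^bsub>dsm M N\<^esub> x = x" using H lm_ring[OF assms(1)] ring.ring_simprules(6) by metis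
  qed
qed

lemma dsm_biprod: assumes "left_module A M" "left_module A N"
  shows "is_biprod A (dsm M N) M N"
proof -
  interpret M: abelian_group M using lm_ag[OF assms(1)] .
  interpret N: abelian_group N using lm_ag[OF assms(2)] .
  show ?thesis unfolding is_biprod_def
  proof (rule exI[of _ "\<lambda>y. enc y \<zero>\<^bsub>N\<^esub>"], rule exI[of _ "\<lambda>z. enc \<zero>\<^bsub>M\<^esub> z"], rule exI[of _ d1], rule exI[of _ d2], intro conjI)
    show "mod_hom A M (dsm M N) (\<lambda>y. enc y \<zero>\<^bsub>N\<^esub>)" unfolding mod_hom_def
      using lm_smult_zero[OF assms(2)] by simp
    show "mod_hom A N (dsm M N) (\<lambda>y. enc \<zero>\<^bsub>M\<^esub> y)" unfolding mod_hom_def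
      using lm_smult_zero[OF assms(1)] by simp
    show "mod_hom A (dsm M N) M d1" unfolding mod_hom_def
      by (auto simp: dsm_carrier)
    show "mod_hom A (dsm M N) N d2" unfolding mod_hom_def
      by (auto simp: dsm_carrier)
  qed (auto simp: dsm_carrier)
qed

lemma ex_biprod: assumes "M \<in> Amod A" "N \<in> Amod A"
  shows "\<exists>X\<in>Amod A. is_biprod A X M N"
proof -
  have l: "left_module A M" "left_module A N" "fin_gen A M" "fin_gen A N" using assms by (auto simp: Amod_def)
  have "fin_gen A (dsm M N)" by (rule fin_gen_biprod[OF dsm_biprod[OF l(1,2)] dsm_lm[OF l(1,2)] l])
  then show ?thesis using dsm_biprod[OF l(1,2)] dsm_lm[OF l(1,2)] by (auto simp: Amod_def)
qed


lemma dsums_Amod: "X \<in> dsums A S \<Longrightarrow> X \<in> Amod A"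
  by (induction rule: dsums.induct) auto

lemma dsums_retr: assumes "X \<in> dsums A S" "S \<subseteq> Amod A" shows "retr A S X"
  using assms(1)
proof (induction rule: dsums.induct)
  case (dsums_zero M) then show ?case by (rule retr_zero)
next
  case (dsums_step Y Z X)
  have "retr A S Z" using retr_base[OF _ assms(2)] dsums_step by blast
  then show ?case using retr_biprod dsums_step by blast
qed

lemma addc_retr: assumes "X \<in> addc A S" "S \<subseteq> Amod A" shows "retr A S X"
proof -
  obtain Y Z where Y: "Y \<in> dsums A S" "Z \<in> Amod A" "is_biprod A Y X Z" and X: "X \<in> Amod A"
    using assms(1) by (auto simp: addc_def)
  have l: "left_module A Y" "left_module A X" "left_module A Z"
    using X Y dsums_Amod by (auto simp: Amod_def)
  obtain i1 i2 p1 p2 where b: "mod_hom A X Y i1" "mod_hom A Y X p1" "\<forall>x\<in>carrier X. p1 (i1 x) = x"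
    using biprod_lms[OF Y(3) l] by metis
  show ?thesis by (rule retr_summand[OF dsums_retr[OF Y(1) assms(2)] X b])
qed

lemma build_dsums: assumes "dsgood A S X ds" "X \<in> Amod A" "S \<subseteq> Amod A"
  shows "\<exists>W\<in>dsums A S. \<exists>i p. mod_hom A X W i \<and> mod_hom A W X p \<and> (\<forall>x\<in>carrier X. p (i x) = rsum X ds x)"
  using assms(1)
proof (induction ds)
  case Nil
  have rA: "ring A" using assms(2) lm_ring by (auto simp: Amod_def)
  have lX: "left_module A X" using assms(2) by (auto simp: Amod_def)
  have lZ: "left_module A zmod" using zmod_Amod[OF rA] by (auto simp: Amod_def)
  have "zmod \<in> dsums A S" using zmod_Amod[OF rA] by (auto intro: dsums_zero)
  moreover have "mod_hom A X zmod (\<lambda>_. \<zero>\<^bsub>zmod\<^esub>)" "mod_hom A zmod X (\<lambda>_. \<zero>\<^bsub>X\<^esub>)"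
    using hom_zmap[OF lZ] hom_zmap[OF lX] by auto
  moreover have "\<forall>x\<in>carrier X. (\<lambda>_. \<zero>\<^bsub>X\<^esub>) ((\<lambda>_. \<zero>\<^bsub>zmod\<^esub>) x) = rsum X [] x" by simp
  ultimately show ?case by (intro bexI[of _ zmod]) (rule exI, rule exI, (intro conjI; assumption))
next
  case (Cons d ds)
  obtain Z u v where d: "d = (Z,u,v)" by (cases d) auto
  have Z: "Z \<in> S" "left_module A Z" "mod_hom A X Z u" "mod_hom A Z X v" and g: "dsgood A S X ds"
    using Cons(2) d by auto
  obtain W' i' p' where W': "W' \<in> dsums A S" "mod_hom A X W' i'" "mod_hom A W' X p'"
    "\<forall>x\<in>carrier X. p' (i' x) = rsum X ds x" using Cons(1)[OF g] by blast
  have ZA: "Z \<in> Amod A" using Z assms(3) by auto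
  obtain W where W: "W \<in> Amod A" "is_biprod A W W' Z" using ex_biprod[OF dsums_Amod[OF W'(1)] ZA] by blast
  have WS: "W \<in> dsums A S" by (rule dsums_step[OF W'(1) Z(1) W])
  have l: "left_module A W" "left_module A W'" "left_module A Z" "left_module A X"
    using W dsums_Amod[OF W'(1)] ZA assms(2) by (auto simp: Amod_def)
  interpret W: abelian_group W using lm_ag[OF l(1)] .
  interpret X: abelian_group X using lm_ag[OF l(4)] .
  interpret W': abelian_group W' using lm_ag[OF l(2)] .
  interpret Z: abelian_group Z using lm_ag[OF l(3)] .
  obtain j1 j2 q1 q2 where b: "mod_hom A W' W j1" "mod_hom A Z W j2" "mod_hom A W W' q1" "mod_hom A W Z q2"
     "\<forall>y\<in>carrier W'. q1 (j1 y) = y" "\<forall>z\<in>carrier Z. q2 (j2 z) = z"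
     "\<forall>z\<in>carrier Z. q1 (j2 z) = \<zero>\<^bsub>W'\<^esub>" "\<forall>y\<in>carrier W'. q2 (j1 y) = \<zero>\<^bsub>Z\<^esub>"
     "\<forall>x\<in>carrier W. j1 (q1 x) \<oplus>\<^bsub>W\<^esub> j2 (q2 x) = x"
    by (rule biprod_lms[OF W(2) l(1-3)])
  define i where "i x = j1 (i' x) \<oplus>\<^bsub>W\<^esub> j2 (u x)" for x
  define p where "p w = p' (q1 w) \<oplus>\<^bsub>X\<^esub> v (q2 w)" for w
  have hi: "mod_hom A X W i" unfolding i_def
    by (rule hom_plus[OF hom_comp[OF W'(2) b(1)] hom_comp[OF Z(3) b(2)] l(1)])
  have hp: "mod_hom A W X p" unfolding p_def
    by (rule hom_plus[OF hom_comp[OF b(3) W'(3)] hom_comp[OF b(4) Z(4)] l(4)])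
  have "p (i x) = rsum X (d # ds) x" if x: "x \<in> carrier X" for x
  proof -
    have c: "i' x \<in> carrier W'" "u x \<in> carrier Z" "j1 (i' x) \<in> carrier W" "j2 (u x) \<in> carrier W"
      using x W'(2) Z(3) b(1,2) hom_closed by metis+
    have "q1 (i x) = i' x" unfolding i_def using c b(5,7) hom_add[OF b(3) c(3,4)] by simp
    moreover have "q2 (i x) = u x" unfolding i_def using c b(6,8) hom_add[OF b(4) c(3,4)] by simp
    ultimately have "p (i x) = rsum X ds x \<oplus>\<^bsub>X\<^esub> v (u x)" unfolding p_def using W'(4) x by simp
    also have "\<dots> = rsum X (d # ds) x" using d x rsum_closed[OF l(4) g x] hom_closed[OF Z(4) c(2)]
      by (simp add: X.a_comm)
    finally show ?thesis .
  qed
  then have "\<forall>x\<in>carrier X. p (i x) = rsum X (d # ds) x" by blast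
  then show ?case using WS hi hp by blast
qed

lemma retr_addc: assumes "retr A S X" "S \<subseteq> Amod A" shows "X \<in> addc A S"
proof -
  obtain ds where ds: "dsgood A S X ds" "\<forall>x\<in>carrier X. rsum X ds x = x" and X: "X \<in> Amod A"
    using assms(1) by (auto simp: retr_def)
  obtain W i p where W: "W \<in> dsums A S" "mod_hom A X W i" "mod_hom A W X p" "\<forall>x\<in>carrier X. p (i x) = rsum X ds x"
    using build_dsums[OF ds(1) X assms(2)] by blast
  obtain Z where "Z \<in> Amod A" "is_biprod A W X Z"
    using split_biprod[OF X dsums_Amod[OF W(1)] W(2,3)] W(4) ds(2) by auto
  then show ?thesis using X W(1) by (auto simp: addc_def)
qed

lemma addc_eq: "S \<subseteq> Amod A \<Longrightarrow> addc A S = {X. retr A S X}"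
  using addc_retr retr_addc by blast


lemma addc_sub: "addc A S \<subseteq> Amod A" by (auto simp: addc_def)

lemma addc_mono: "S \<subseteq> S' \<Longrightarrow> S' \<subseteq> Amod A \<Longrightarrow> addc A S \<subseteq> addc A S'"
  using addc_eq[of S A] addc_eq[of S' A] retr_mono by blast

lemma addc_base: "S \<subseteq> Amod A \<Longrightarrow> S \<subseteq> addc A S"
  using addc_eq[of S A] retr_base by blast

lemma addc_idem: assumes "S \<subseteq> Amod A" shows "addc A (addc A S) \<subseteq> addc A S"
proof
  fix X assume "X \<in> addc A (addc A S)"
  then have "retr A (addc A S) X" using addc_retr[OF _ addc_sub] by blast
  then have "retr A {Y. retr A S Y} X" using addc_eq[OF assms] by simp
  then have "retr A S X" by (rule retr_idem)
  then show "X \<in> addc A S" using addc_eq[OF assms] by simp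
qed

lemma addc_zero: "X \<in> Amod A \<Longrightarrow> zero_mod X \<Longrightarrow> S \<subseteq> Amod A \<Longrightarrow> X \<in> addc A S"
  using retr_zero retr_addc by blast

lemma addc_biprod: "Y \<in> addc A S \<Longrightarrow> Z \<in> addc A S \<Longrightarrow> X \<in> Amod A \<Longrightarrow> is_biprod A X Y Z \<Longrightarrow> S \<subseteq> Amod A
  \<Longrightarrow> X \<in> addc A S"
  using retr_biprod[of A S Y Z X] addc_eq[of S A] by blast

lemma addc_summand: "Y \<in> addc A S \<Longrightarrow> X \<in> Amod A \<Longrightarrow> mod_hom A X Y i \<Longrightarrow> mod_hom A Y X p \<Longrightarrow>
   \<forall>x\<in>carrier X. p (i x) = x \<Longrightarrow> S \<subseteq> Amod A \<Longrightarrow> X \<in> addc A S"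
  using retr_summand[of A S Y X i p] addc_eq[of S A] by blast


lemma ag_diff0: assumes "abelian_group M" "x \<in> carrier M" "y \<in> carrier M" "x \<ominus>\<^bsub>M\<^esub> y = \<zero>\<^bsub>M\<^esub>"
  shows "x = y"
proof -
  interpret abelian_group M by fact
  have "x = x \<oplus>\<^bsub>M\<^esub> (\<ominus>\<^bsub>M\<^esub> y \<oplus>\<^bsub>M\<^esub> y)" using assms(2,3) by (simp add: l_neg)
  also have "\<dots> = (x \<ominus>\<^bsub>M\<^esub> y) \<oplus>\<^bsub>M\<^esub> y" using assms(2,3) by (simp add: minus_eq a_assoc)
  also have "\<dots> = y" using assms by simp
  finally show ?thesis .
qed

lemma inj_ker: assumes "mod_hom A M N f" "left_module A M" "left_module A N"
  "\<forall>x\<in>carrier M. f x = \<zero>\<^bsub>N\<^esub> \<longrightarrow> x = \<zero>\<^bsub>M\<^esub>"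
  shows "inj_on f (carrier M)"
proof (rule inj_onI)
  interpret M: abelian_group M using lm_ag[OF assms(2)] .
  interpret N: abelian_group N using lm_ag[OF assms(3)] .
  fix x y assume xy: "x \<in> carrier M" "y \<in> carrier M" "f x = f y"
  then have "f (x \<ominus>\<^bsub>M\<^esub> y) = \<zero>\<^bsub>N\<^esub>" using hom_diff[OF assms(1-3)] hom_closed[OF assms(1)]
    by (simp add: N.minus_eq N.r_neg)
  then have "x \<ominus>\<^bsub>M\<^esub> y = \<zero>\<^bsub>M\<^esub>" using assms(4) xy by simp
  then show "x = y" using ag_diff0[OF lm_ag[OF assms(2)]] xy by blast
qed

lemma ker_inj: assumes "mod_hom A M N f" "left_module A M" "left_module A N" "inj_on f (carrier M)"
  "x \<in> carrier M" "f x = \<zero>\<^bsub>N\<^esub>" shows "x = \<zero>\<^bsub>M\<^esub>"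
proof -
  interpret M: abelian_group M using lm_ag[OF assms(2)] .
  show ?thesis using assms hom_zero[OF assms(1-3)] by (metis M.zero_closed inj_on_def)
qed

locale bp =
  fixes A X Y Z i1 i2 p1 p2
  assumes lX: "left_module A X" and lY: "left_module A Y" and lZ: "left_module A Z"
  and hi1: "mod_hom A Y X i1" and hi2: "mod_hom A Z X i2" and hp1: "mod_hom A X Y p1" and hp2: "mod_hom A X Z p2"
  and p1i1: "\<forall>y\<in>carrier Y. p1 (i1 y) = y" and p2i2: "\<forall>z\<in>carrier Z. p2 (i2 z) = z"
  and p1i2: "\<forall>z\<in>carrier Z. p1 (i2 z) = \<zero>\<^bsub>Y\<^esub>" and p2i1: "\<forall>y\<in>carrier Y. p2 (i1 y) = \<zero>\<^bsub>Z\<^esub>"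
  and dec: "\<forall>x\<in>carrier X. i1 (p1 x) \<oplus>\<^bsub>X\<^esub> i2 (p2 x) = x"
begin

lemma agX: "abelian_group X" using lm_ag[OF lX] .
lemma agY: "abelian_group Y" using lm_ag[OF lY] .
lemma agZ: "abelian_group Z" using lm_ag[OF lZ] .

lemma cl: "y \<in> carrier Y \<Longrightarrow> i1 y \<in> carrier X" "z \<in> carrier Z \<Longrightarrow> i2 z \<in> carrier X"
  "x \<in> carrier X \<Longrightarrow> p1 x \<in> carrier Y" "x \<in> carrier X \<Longrightarrow> p2 x \<in> carrier Z"
  using hi1 hi2 hp1 hp2 hom_closed by metis+

lemma sum_cl: "y \<in> carrier Y \<Longrightarrow> z \<in> carrier Z \<Longrightarrow> i1 y \<oplus>\<^bsub>X\<^esub> i2 z \<in> carrier X"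
  using cl abelian_monoid.a_closed[OF abelian_group.axioms(1)[OF agX]] by blast

lemma p1_sum: "y \<in> carrier Y \<Longrightarrow> z \<in> carrier Z \<Longrightarrow> p1 (i1 y \<oplus>\<^bsub>X\<^esub> i2 z) = y"
proof -
  interpret Y: abelian_group Y by (rule agY)
  assume a: "y \<in> carrier Y" "z \<in> carrier Z"
  then show ?thesis using hom_add[OF hp1 cl(1,2)] p1i1 p1i2 by simp
qed

lemma p2_sum: "y \<in> carrier Y \<Longrightarrow> z \<in> carrier Z \<Longrightarrow> p2 (i1 y \<oplus>\<^bsub>X\<^esub> i2 z) = z"
proof -
  interpret Z: abelian_group Z by (rule agZ)
  assume a: "y \<in> carrier Y" "z \<in> carrier Z"
  then show ?thesis using hom_add[OF hp2 cl(1,2)] p2i1 p2i2 by simp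
qed

lemma i1_0: "i1 \<zero>\<^bsub>Y\<^esub> = \<zero>\<^bsub>X\<^esub>" using hom_zero[OF hi1 lY lX] .
lemma i2_0: "i2 \<zero>\<^bsub>Z\<^esub> = \<zero>\<^bsub>X\<^esub>" using hom_zero[OF hi2 lZ lX] .
lemma p1_0: "p1 \<zero>\<^bsub>X\<^esub> = \<zero>\<^bsub>Y\<^esub>" using hom_zero[OF hp1 lX lY] .
lemma p2_0: "p2 \<zero>\<^bsub>X\<^esub> = \<zero>\<^bsub>Z\<^esub>" using hom_zero[OF hp2 lX lZ] .

lemma zero_iff: "x \<in> carrier X \<Longrightarrow> p1 x = \<zero>\<^bsub>Y\<^esub> \<Longrightarrow> p2 x = \<zero>\<^bsub>Z\<^esub> \<Longrightarrow> x = \<zero>\<^bsub>X\<^esub>"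
proof -
  interpret X: abelian_group X by (rule agX)
  assume "x \<in> carrier X" "p1 x = \<zero>\<^bsub>Y\<^esub>" "p2 x = \<zero>\<^bsub>Z\<^esub>"
  then show ?thesis using dec i1_0 i2_0 by force
qed

end

lemma bp_of: assumes "is_biprod A X Y Z" "left_module A X" "left_module A Y" "left_module A Z"
  obtains i1 i2 p1 p2 where "bp A X Y Z i1 i2 p1 p2"
proof -
  obtain i1 i2 p1 p2 where b: "mod_hom A Y X i1" "mod_hom A Z X i2" "mod_hom A X Y p1" "mod_hom A X Z p2"
     "\<forall>y\<in>carrier Y. p1 (i1 y) = y" "\<forall>z\<in>carrier Z. p2 (i2 z) = z"
     "\<forall>z\<in>carrier Z. p1 (i2 z) = \<zero>\<^bsub>Y\<^esub>" "\<forall>y\<in>carrier Y. p2 (i1 y) = \<zero>\<^bsub>Z\<^esub>"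
     "\<forall>x\<in>carrier X. i1 (p1 x) \<oplus>\<^bsub>X\<^esub> i2 (p2 x) = x"
    by (rule biprod_lms[OF assms])
  have "bp A X Y Z i1 i2 p1 p2" by (rule bp.intro[OF assms(2-4) b])
  then show ?thesis by (rule that)
qed

lemma ses_left: assumes "left_module A M" "left_module A Z" "zero_mod Z" shows "ses A M M Z"
  unfolding ses_def
proof (intro exI conjI)
  show "mod_hom A M M (\<lambda>x. x)" by (rule hom_id)
  show "mod_hom A M Z (\<lambda>x. \<zero>\<^bsub>Z\<^esub>)" by (rule hom_zmap[OF assms(2)])
  show "inj_on (\<lambda>x. x) (carrier M)" by simp
  show "(\<lambda>x. \<zero>\<^bsub>Z\<^esub>) ` carrier M = carrier Z"
  proof -
    interpret M: abelian_group M using lm_ag[OF assms(1)] .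
    show ?thesis using assms(3) M.zero_closed by (auto simp: zero_mod_def)
  qed
  show "(\<lambda>x. x) ` carrier M = {y \<in> carrier M. \<zero>\<^bsub>Z\<^esub> = \<zero>\<^bsub>Z\<^esub>}" by simp
qed

lemma ses_right: assumes "left_module A M" "left_module A Z" "zero_mod Z" shows "ses A Z M M"
  unfolding ses_def
proof (intro exI conjI)
  interpret M: abelian_group M using lm_ag[OF assms(1)] .
  show "mod_hom A Z M (\<lambda>x. \<zero>\<^bsub>M\<^esub>)" by (rule hom_zmap[OF assms(1)])
  show "mod_hom A M M (\<lambda>x. x)" by (rule hom_id)
  show "inj_on (\<lambda>x. \<zero>\<^bsub>M\<^esub>) (carrier Z)" using assms(3) by (simp add: zero_mod_def)
  show "(\<lambda>x. x) ` carrier M = carrier M" by simp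
  show "(\<lambda>x. \<zero>\<^bsub>M\<^esub>) ` carrier Z = {y \<in> carrier M. y = \<zero>\<^bsub>M\<^esub>}" using assms(3) by (auto simp: zero_mod_def)
qed

lemma biprod_zero: assumes "left_module A V" "left_module A Z" "zero_mod Z" shows "is_biprod A V V Z"
  unfolding is_biprod_def
proof (rule exI[of _ "\<lambda>x. x"], rule exI[of _ "\<lambda>x. \<zero>\<^bsub>V\<^esub>"], rule exI[of _ "\<lambda>x. x"], rule exI[of _ "\<lambda>x. \<zero>\<^bsub>Z\<^esub>"], intro conjI)
  interpret V: abelian_group V using lm_ag[OF assms(1)] .
  show "mod_hom A V V (\<lambda>x. x)" by (rule hom_id)
  show "mod_hom A V V (\<lambda>x. x)" by (rule hom_id)
  show "mod_hom A Z V (\<lambda>x. \<zero>\<^bsub>V\<^esub>)" by (rule hom_zmap[OF assms(1)])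
  show "mod_hom A V Z (\<lambda>x. \<zero>\<^bsub>Z\<^esub>)" by (rule hom_zmap[OF assms(2)])
  show "\<forall>z\<in>carrier Z. (\<lambda>x. \<zero>\<^bsub>Z\<^esub>) ((\<lambda>x. \<zero>\<^bsub>V\<^esub>) z) = z" using assms(3) by (simp add: zero_mod_def)
  show "\<forall>x\<in>carrier V. x \<oplus>\<^bsub>V\<^esub> \<zero>\<^bsub>V\<^esub> = x" by simp
qed auto


lemma ses_data: assumes "ses A X Y Z"
  obtains f g where "mod_hom A X Y f" "mod_hom A Y Z g" "inj_on f (carrier X)" "g ` carrier Y = carrier Z"
     "f ` carrier X = {y \<in> carrier Y. g y = \<zero>\<^bsub>Z\<^esub>}"
  using assms unfolding ses_def by (elim exE conjE) (rule that)

lemma ses_biprod: assumes s1: "ses A U1 M1 V1" and s2: "ses A U2 M2 V2"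
  and bU: "is_biprod A U U1 U2" and bM: "is_biprod A M M1 M2" and bV: "is_biprod A V V1 V2"
  and l: "left_module A U" "left_module A U1" "left_module A U2" "left_module A M" "left_module A M1" "left_module A M2"
    "left_module A V" "left_module A V1" "left_module A V2"
  shows "ses A U M V"
proof -
  obtain f1 g1 where F1: "mod_hom A U1 M1 f1" "mod_hom A M1 V1 g1" "inj_on f1 (carrier U1)" "g1 ` carrier M1 = carrier V1"
     "f1 ` carrier U1 = {y \<in> carrier M1. g1 y = \<zero>\<^bsub>V1\<^esub>}" by (rule ses_data[OF s1])
  obtain f2 g2 where F2: "mod_hom A U2 M2 f2" "mod_hom A M2 V2 g2" "inj_on f2 (carrier U2)" "g2 ` carrier M2 = carrier V2"
     "f2 ` carrier U2 = {y \<in> carrier M2. g2 y = \<zero>\<^bsub>V2\<^esub>}" by (rule ses_data[OF s2])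
  obtain a1 a2 b1 b2 where BU: "bp A U U1 U2 a1 a2 b1 b2" using bp_of[OF bU l(1-3)] by blast
  obtain c1 c2 d1 d2 where BM: "bp A M M1 M2 c1 c2 d1 d2" using bp_of[OF bM l(4-6)] by blast
  obtain r1 r2 t1 t2 where BV: "bp A V V1 V2 r1 r2 t1 t2" using bp_of[OF bV l(7-9)] by blast
  interpret BU: bp A U U1 U2 a1 a2 b1 b2 by (rule BU)
  interpret BM: bp A M M1 M2 c1 c2 d1 d2 by (rule BM)
  interpret BV: bp A V V1 V2 r1 r2 t1 t2 by (rule BV)
  interpret U: abelian_group U using lm_ag[OF l(1)] .
  interpret M: abelian_group M using lm_ag[OF l(4)] .
  interpret V: abelian_group V using lm_ag[OF l(7)] .
  define f where "f u = c1 (f1 (b1 u)) \<oplus>\<^bsub>M\<^esub> c2 (f2 (b2 u))" for u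
  define g where "g m = r1 (g1 (d1 m)) \<oplus>\<^bsub>V\<^esub> r2 (g2 (d2 m))" for m
  have hf: "mod_hom A U M f" unfolding f_def
    by (rule hom_plus[OF hom_comp[OF hom_comp[OF BU.hp1 F1(1)] BM.hi1] hom_comp[OF hom_comp[OF BU.hp2 F2(1)] BM.hi2] l(4)])
  have hg: "mod_hom A M V g" unfolding g_def
    by (rule hom_plus[OF hom_comp[OF hom_comp[OF BM.hp1 F1(2)] BV.hi1] hom_comp[OF hom_comp[OF BM.hp2 F2(2)] BV.hi2] l(7)])
  have cf1: "\<And>x. x \<in> carrier U1 \<Longrightarrow> f1 x \<in> carrier M1" "\<And>x. x \<in> carrier M1 \<Longrightarrow> g1 x \<in> carrier V1"
    "\<And>x. x \<in> carrier U2 \<Longrightarrow> f2 x \<in> carrier M2" "\<And>x. x \<in> carrier M2 \<Longrightarrow> g2 x \<in> carrier V2"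
    using hom_closed[OF F1(1)] hom_closed[OF F1(2)] hom_closed[OF F2(1)] hom_closed[OF F2(2)] by auto
  have df: "d1 (f u) = f1 (b1 u)" "d2 (f u) = f2 (b2 u)" if "u \<in> carrier U" for u
    unfolding f_def using BM.p1_sum[OF cf1(1)[OF BU.cl(3)[OF that]] cf1(3)[OF BU.cl(4)[OF that]]]
      BM.p2_sum[OF cf1(1)[OF BU.cl(3)[OF that]] cf1(3)[OF BU.cl(4)[OF that]]] by auto
  have tg: "t1 (g m) = g1 (d1 m)" "t2 (g m) = g2 (d2 m)" if "m \<in> carrier M" for m
    unfolding g_def using BV.p1_sum[OF cf1(2)[OF BM.cl(3)[OF that]] cf1(4)[OF BM.cl(4)[OF that]]]
      BV.p2_sum[OF cf1(2)[OF BM.cl(3)[OF that]] cf1(4)[OF BM.cl(4)[OF that]]] by auto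
  have f10: "f1 \<zero>\<^bsub>U1\<^esub> = \<zero>\<^bsub>M1\<^esub>" "f2 \<zero>\<^bsub>U2\<^esub> = \<zero>\<^bsub>M2\<^esub>" "g1 \<zero>\<^bsub>M1\<^esub> = \<zero>\<^bsub>V1\<^esub>" "g2 \<zero>\<^bsub>M2\<^esub> = \<zero>\<^bsub>V2\<^esub>"
    using hom_zero[OF F1(1) l(2,5)] hom_zero[OF F2(1) l(3,6)] hom_zero[OF F1(2) l(5,8)] hom_zero[OF F2(2) l(6,9)] by auto
  have inj: "inj_on f (carrier U)"
  proof (rule inj_ker[OF hf l(1,4)], intro ballI impI)
    fix u assume u: "u \<in> carrier U" "f u = \<zero>\<^bsub>M\<^esub>"
    have "f1 (b1 u) = \<zero>\<^bsub>M1\<^esub>" using df(1)[OF u(1)] u(2) BM.p1_0 by simp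
    then have 1: "b1 u = \<zero>\<^bsub>U1\<^esub>" using ker_inj[OF F1(1) l(2,5) F1(3)] BU.cl u by blast
    have "f2 (b2 u) = \<zero>\<^bsub>M2\<^esub>" using df(2)[OF u(1)] u(2) BM.p2_0 by simp
    then have 2: "b2 u = \<zero>\<^bsub>U2\<^esub>" using ker_inj[OF F2(1) l(3,6) F2(3)] BU.cl u by blast
    show "u = \<zero>\<^bsub>U\<^esub>" using BU.zero_iff u 1 2 by blast
  qed
  have surj: "g ` carrier M = carrier V"
  proof
    show "g ` carrier M \<subseteq> carrier V" using hom_closed[OF hg] by blast
    show "carrier V \<subseteq> g ` carrier M"
    proof
      fix v assume v: "v \<in> carrier V"
      obtain m1 where m1: "m1 \<in> carrier M1" "g1 m1 = t1 v" using F1(4) BV.cl(3)[OF v] by (metis imageE)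
      obtain m2 where m2: "m2 \<in> carrier M2" "g2 m2 = t2 v" using F2(4) BV.cl(4)[OF v] by (metis imageE)
      have "g (c1 m1 \<oplus>\<^bsub>M\<^esub> c2 m2) = r1 (t1 v) \<oplus>\<^bsub>V\<^esub> r2 (t2 v)"
        unfolding g_def using BM.p1_sum BM.p2_sum m1 m2 by simp
      also have "\<dots> = v" using BV.dec v by simp
      finally show "v \<in> g ` carrier M" using BM.sum_cl m1 m2 by (metis image_eqI)
    qed
  qed
  have exact: "f ` carrier U = {y \<in> carrier M. g y = \<zero>\<^bsub>V\<^esub>}"
  proof
    show "f ` carrier U \<subseteq> {y \<in> carrier M. g y = \<zero>\<^bsub>V\<^esub>}"
    proof
      fix m assume "m \<in> f ` carrier U"
      then obtain u where u: "u \<in> carrier U" "m = f u" by blast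
      have "g1 (f1 (b1 u)) = \<zero>\<^bsub>V1\<^esub>" using F1(5) BU.cl u by blast
      moreover have "g2 (f2 (b2 u)) = \<zero>\<^bsub>V2\<^esub>" using F2(5) BU.cl u by blast
      ultimately have "g m = \<zero>\<^bsub>V\<^esub>" unfolding g_def using u df BV.i1_0 BV.i2_0 by simp
      then show "m \<in> {y \<in> carrier M. g y = \<zero>\<^bsub>V\<^esub>}" using u hom_closed[OF hf] by blast
    qed
    show "{y \<in> carrier M. g y = \<zero>\<^bsub>V\<^esub>} \<subseteq> f ` carrier U"
    proof
      fix m assume "m \<in> {y \<in> carrier M. g y = \<zero>\<^bsub>V\<^esub>}"
      then have m: "m \<in> carrier M" "g m = \<zero>\<^bsub>V\<^esub>" by auto
      have "g1 (d1 m) = \<zero>\<^bsub>V1\<^esub>" using tg(1)[OF m(1)] m(2) BV.p1_0 by simp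
      then obtain u1 where u1: "u1 \<in> carrier U1" "f1 u1 = d1 m" using F1(5) BM.cl(3)[OF m(1)] by (metis (mono_tags, lifting) imageE mem_Collect_eq)
      have "g2 (d2 m) = \<zero>\<^bsub>V2\<^esub>" using tg(2)[OF m(1)] m(2) BV.p2_0 by simp
      then obtain u2 where u2: "u2 \<in> carrier U2" "f2 u2 = d2 m" using F2(5) BM.cl(4)[OF m(1)] by (metis (mono_tags, lifting) imageE mem_Collect_eq)
      have "f (a1 u1 \<oplus>\<^bsub>U\<^esub> a2 u2) = c1 (d1 m) \<oplus>\<^bsub>M\<^esub> c2 (d2 m)"
        unfolding f_def using BU.p1_sum BU.p2_sum u1 u2 by simp
      also have "\<dots> = m" using BM.dec m by simp
      finally show "m \<in> f ` carrier U" using BU.sum_cl u1 u2 by (metis image_eqI)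
    qed
  qed
  show ?thesis unfolding ses_def using hf hg inj surj exact by blast
qed


locale qctx =
  fixes A :: "'a ring" and M :: "'a amod" and K :: "'a list set set"
  assumes lM: "left_module A M" and KM: "K \<subseteq> carrier M" and K0: "\<zero>\<^bsub>M\<^esub> \<in> K"
  and Kadd: "\<And>x y. x \<in> K \<Longrightarrow> y \<in> K \<Longrightarrow> x \<oplus>\<^bsub>M\<^esub> y \<in> K"
  and Kneg: "\<And>x. x \<in> K \<Longrightarrow> \<ominus>\<^bsub>M\<^esub> x \<in> K"
  and Ksm: "\<And>a x. a \<in> carrier A \<Longrightarrow> x \<in> K \<Longrightarrow> a \<odot>\<^bsub>M\<^esub> x \<in> K"
begin

sublocale abelian_group M using lm_ag[OF lM] .

definition rel where "rel x y \<longleftrightarrow> x \<ominus>\<^bsub>M\<^esub> y \<in> K"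

definition qr where "qr x = (SOME y. y \<in> carrier M \<and> rel x y)"

lemma rel_refl: "x \<in> carrier M \<Longrightarrow> rel x x"
  by (simp add: rel_def minus_eq r_neg K0)

lemma rel_sym: "x \<in> carrier M \<Longrightarrow> y \<in> carrier M \<Longrightarrow> rel x y \<Longrightarrow> rel y x"
proof -
  assume a: "x \<in> carrier M" "y \<in> carrier M" "rel x y"
  have "y \<ominus>\<^bsub>M\<^esub> x = \<ominus>\<^bsub>M\<^esub> (x \<ominus>\<^bsub>M\<^esub> y)" using a by (simp add: minus_eq minus_add a_comm)
  then show ?thesis using a Kneg by (simp add: rel_def)
qed

lemma rel_trans: "x \<in> carrier M \<Longrightarrow> y \<in> carrier M \<Longrightarrow> z \<in> carrier M \<Longrightarrow> rel x y \<Longrightarrow> rel y z \<Longrightarrow> rel x z"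
proof -
  assume a: "x \<in> carrier M" "y \<in> carrier M" "z \<in> carrier M" "rel x y" "rel y z"
  have "(x \<ominus>\<^bsub>M\<^esub> y) \<oplus>\<^bsub>M\<^esub> (y \<ominus>\<^bsub>M\<^esub> z) = x \<oplus>\<^bsub>M\<^esub> ((\<ominus>\<^bsub>M\<^esub> y \<oplus>\<^bsub>M\<^esub> y) \<oplus>\<^bsub>M\<^esub> \<ominus>\<^bsub>M\<^esub> z)"
    using a by (simp add: minus_eq a_assoc)
  then have "x \<ominus>\<^bsub>M\<^esub> z = (x \<ominus>\<^bsub>M\<^esub> y) \<oplus>\<^bsub>M\<^esub> (y \<ominus>\<^bsub>M\<^esub> z)"
    using a by (simp add: l_neg minus_eq)
  then show ?thesis using a Kadd by (simp add: rel_def)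
qed

lemma rel_add: "x \<in> carrier M \<Longrightarrow> x' \<in> carrier M \<Longrightarrow> y \<in> carrier M \<Longrightarrow> rel x x' \<Longrightarrow> rel (x \<oplus>\<^bsub>M\<^esub> y) (x' \<oplus>\<^bsub>M\<^esub> y)"
proof -
  assume a: "x \<in> carrier M" "x' \<in> carrier M" "y \<in> carrier M" "rel x x'"
  have "(x \<oplus>\<^bsub>M\<^esub> y) \<ominus>\<^bsub>M\<^esub> (x' \<oplus>\<^bsub>M\<^esub> y) = x \<ominus>\<^bsub>M\<^esub> x'" using a
    by (simp add: minus_eq minus_add a_ac r_neg)
  then show ?thesis using a by (simp add: rel_def)
qed

lemma rel_sm: "a \<in> carrier A \<Longrightarrow> x \<in> carrier M \<Longrightarrow> x' \<in> carrier M \<Longrightarrow> rel x x' \<Longrightarrow> rel (a \<odot>\<^bsub>M\<^esub> x) (a \<odot>\<^bsub>M\<^esub> x')"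
proof -
  assume a: "a \<in> carrier A" "x \<in> carrier M" "x' \<in> carrier M" "rel x x'"
  have "a \<odot>\<^bsub>M\<^esub> (x \<ominus>\<^bsub>M\<^esub> x') = (a \<odot>\<^bsub>M\<^esub> x) \<ominus>\<^bsub>M\<^esub> (a \<odot>\<^bsub>M\<^esub> x')" using a lM
    by (simp add: minus_eq lm_rdistr lm_smult_minus)
  moreover have "a \<odot>\<^bsub>M\<^esub> (x \<ominus>\<^bsub>M\<^esub> x') \<in> K" using a Ksm by (simp add: rel_def)
  ultimately show ?thesis by (simp add: rel_def)
qed

lemma qr_prop: "x \<in> carrier M \<Longrightarrow> qr x \<in> carrier M \<and> rel x (qr x)"
  unfolding qr_def by (rule someI_ex) (use rel_refl in blast)

lemma qr_closed: "x \<in> carrier M \<Longrightarrow> qr x \<in> carrier M" using qr_prop by blast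

lemma qr_eq_iff: "x \<in> carrier M \<Longrightarrow> y \<in> carrier M \<Longrightarrow> qr x = qr y \<longleftrightarrow> rel x y"
proof
  assume a: "x \<in> carrier M" "y \<in> carrier M"
  show "qr x = qr y \<Longrightarrow> rel x y"
    using a qr_prop[OF a(1)] qr_prop[OF a(2)] rel_sym rel_trans by metis
  assume r: "rel x y"
  have "(\<lambda>z. z \<in> carrier M \<and> rel x z) = (\<lambda>z. z \<in> carrier M \<and> rel y z)"
    using a r rel_sym rel_trans by blast
  then show "qr x = qr y" unfolding qr_def by simp
qed

lemma qr_absorb1: "x \<in> carrier M \<Longrightarrow> y \<in> carrier M \<Longrightarrow> qr (qr x \<oplus>\<^bsub>M\<^esub> y) = qr (x \<oplus>\<^bsub>M\<^esub> y)"
  using qr_eq_iff qr_prop rel_add rel_sym by simp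

lemma qr_absorb2: "x \<in> carrier M \<Longrightarrow> y \<in> carrier M \<Longrightarrow> qr (y \<oplus>\<^bsub>M\<^esub> qr x) = qr (y \<oplus>\<^bsub>M\<^esub> x)"
  using qr_absorb1 qr_closed a_comm by metis

lemma qr_absorb3: "a \<in> carrier A \<Longrightarrow> x \<in> carrier M \<Longrightarrow> qr (a \<odot>\<^bsub>M\<^esub> qr x) = qr (a \<odot>\<^bsub>M\<^esub> x)"
  using qr_eq_iff qr_prop rel_sm rel_sym lM by simp

lemma qr_qr: "x \<in> carrier M \<Longrightarrow> qr (qr x) = qr x"
  using qr_eq_iff qr_prop rel_sym by simp

definition Q :: "'a amod" where
  "Q = \<lparr>carrier = qr ` carrier M, mult = (\<lambda>_ _. {}), one = {}, zero = qr \<zero>\<^bsub>M\<^esub>,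
     add = (\<lambda>u v. qr (u \<oplus>\<^bsub>M\<^esub> v)), smult = (\<lambda>a u. qr (a \<odot>\<^bsub>M\<^esub> u))\<rparr>"

lemma Q_simps[simp]: "carrier Q = qr ` carrier M" "\<zero>\<^bsub>Q\<^esub> = qr \<zero>\<^bsub>M\<^esub>"
  "u \<oplus>\<^bsub>Q\<^esub> v = qr (u \<oplus>\<^bsub>M\<^esub> v)" "a \<odot>\<^bsub>Q\<^esub> u = qr (a \<odot>\<^bsub>M\<^esub> u)"
  by (simp_all add: Q_def)

lemma Q_ag: "abelian_group Q"
proof (rule abelian_groupI)
  show "\<zero>\<^bsub>Q\<^esub> \<in> carrier Q" by simp
  show "\<And>x y. x \<in> carrier Q \<Longrightarrow> y \<in> carrier Q \<Longrightarrow> x \<oplus>\<^bsub>Q\<^esub> y \<in> carrier Q"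
    using qr_closed by auto
  show "\<And>x y z. x \<in> carrier Q \<Longrightarrow> y \<in> carrier Q \<Longrightarrow> z \<in> carrier Q \<Longrightarrow> x \<oplus>\<^bsub>Q\<^esub> y \<oplus>\<^bsub>Q\<^esub> z = x \<oplus>\<^bsub>Q\<^esub> (y \<oplus>\<^bsub>Q\<^esub> z)"
    using qr_closed qr_absorb1 qr_absorb2 a_assoc by auto
  show "\<And>x y. x \<in> carrier Q \<Longrightarrow> y \<in> carrier Q \<Longrightarrow> x \<oplus>\<^bsub>Q\<^esub> y = y \<oplus>\<^bsub>Q\<^esub> x"
    using qr_closed a_comm by auto
  show "\<And>x. x \<in> carrier Q \<Longrightarrow> \<zero>\<^bsub>Q\<^esub> \<oplus>\<^bsub>Q\<^esub> x = x"
    using qr_closed qr_absorb1 qr_qr by auto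
  fix x assume "x \<in> carrier Q"
  then obtain z where z: "z \<in> carrier M" "x = qr z" by auto
  have "qr (\<ominus>\<^bsub>M\<^esub> z) \<oplus>\<^bsub>Q\<^esub> x = \<zero>\<^bsub>Q\<^esub>" using z qr_absorb1 qr_absorb2 by (simp add: l_neg qr_closed)
  then show "\<exists>y\<in>carrier Q. y \<oplus>\<^bsub>Q\<^esub> x = \<zero>\<^bsub>Q\<^esub>" using z by (intro bexI[of _ "qr (\<ominus>\<^bsub>M\<^esub> z)"]) auto
qed

lemma Q_lm: "left_module A Q"
proof -
  have H: "\<forall>a\<in>carrier A. \<forall>b\<in>carrier A. \<forall>x\<in>carrier Q. \<forall>y\<in>carrier Q.
    a \<odot>\<^bsub>Q\<^esub> x \<in> carrier Q \<and>
    (a \<oplus>\<^bsub>A\<^esub> b) \<odot>\<^bsub>Q\<^esub> x = a \<odot>\<^bsub>Q\<^esub> x \<oplus>\<^bsub>Q\<^esub> b \<odot>\<^bsub>Q\<^esub> x \<and>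
    a \<odot>\<^bsub>Q\<^esub> (x \<oplus>\<^bsub>Q\<^esub> y) = a \<odot>\<^bsub>Q\<^esub> x \<oplus>\<^bsub>Q\<^esub> a \<odot>\<^bsub>Q\<^esub> y \<and>
    (a \<otimes>\<^bsub>A\<^esub> b) \<odot>\<^bsub>Q\<^esub> x = a \<odot>\<^bsub>Q\<^esub> (b \<odot>\<^bsub>Q\<^esub> x) \<and>
    \<one>\<^bsub>A\<^esub> \<odot>\<^bsub>Q\<^esub> x = x"
  proof (intro ballI)
    fix a b x y assume a: "a \<in> carrier A" and b: "b \<in> carrier A" and x: "x \<in> carrier Q" and y: "y \<in> carrier Q"
    obtain x0 y0 where c: "x0 \<in> carrier M" "y0 \<in> carrier M" "x = qr x0" "y = qr y0" using x y by auto
    have xc: "x \<in> carrier M" "y \<in> carrier M" using c qr_closed by auto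
    have sc: "a \<odot>\<^bsub>M\<^esub> x \<in> carrier M" "b \<odot>\<^bsub>M\<^esub> x \<in> carrier M" "a \<odot>\<^bsub>M\<^esub> y \<in> carrier M"
      "b \<odot>\<^bsub>M\<^esub> x \<in> carrier M" using a b xc lM by auto
    have 1: "a \<odot>\<^bsub>Q\<^esub> x \<in> carrier Q" using sc by simp
    have 2: "(a \<oplus>\<^bsub>A\<^esub> b) \<odot>\<^bsub>Q\<^esub> x = a \<odot>\<^bsub>Q\<^esub> x \<oplus>\<^bsub>Q\<^esub> b \<odot>\<^bsub>Q\<^esub> x"
      using a b xc sc lM by (simp add: lm_ldistr qr_absorb1 qr_absorb2 qr_closed)
    have 3: "a \<odot>\<^bsub>Q\<^esub> (x \<oplus>\<^bsub>Q\<^esub> y) = a \<odot>\<^bsub>Q\<^esub> x \<oplus>\<^bsub>Q\<^esub> a \<odot>\<^bsub>Q\<^esub> y"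
      using a b xc sc lM by (simp add: lm_rdistr qr_absorb1 qr_absorb2 qr_absorb3 qr_closed)
    have 4: "(a \<otimes>\<^bsub>A\<^esub> b) \<odot>\<^bsub>Q\<^esub> x = a \<odot>\<^bsub>Q\<^esub> (b \<odot>\<^bsub>Q\<^esub> x)"
      using a b xc sc lM by (simp add: lm_assoc qr_absorb3 qr_closed)
    have 5: "\<one>\<^bsub>A\<^esub> \<odot>\<^bsub>Q\<^esub> x = x"
      using xc lM c qr_qr by (simp add: lm_one)
    show "a \<odot>\<^bsub>Q\<^esub> x \<in> carrier Q \<and>
    (a \<oplus>\<^bsub>A\<^esub> b) \<odot>\<^bsub>Q\<^esub> x = a \<odot>\<^bsub>Q\<^esub> x \<oplus>\<^bsub>Q\<^esub> b \<odot>\<^bsub>Q\<^esub> x \<and>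
    a \<odot>\<^bsub>Q\<^esub> (x \<oplus>\<^bsub>Q\<^esub> y) = a \<odot>\<^bsub>Q\<^esub> x \<oplus>\<^bsub>Q\<^esub> a \<odot>\<^bsub>Q\<^esub> y \<and>
    (a \<otimes>\<^bsub>A\<^esub> b) \<odot>\<^bsub>Q\<^esub> x = a \<odot>\<^bsub>Q\<^esub> (b \<odot>\<^bsub>Q\<^esub> x) \<and>
    \<one>\<^bsub>A\<^esub> \<odot>\<^bsub>Q\<^esub> x = x" using 1 2 3 4 5 by blast
  qed
  show ?thesis unfolding left_module_def
  proof (intro conjI Q_ag lm_ring[OF lM] ballI)
    fix a x assume "a \<in> carrier A" "x \<in> carrier Q"
    then show "a \<odot>\<^bsub>Q\<^esub> x \<in> carrier Q" using H by blast
  next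
    fix a b x assume "a \<in> carrier A" "b \<in> carrier A" "x \<in> carrier Q"
    then show "(a \<oplus>\<^bsub>A\<^esub> b) \<odot>\<^bsub>Q\<^esub> x = a \<odot>\<^bsub>Q\<^esub> x \<oplus>\<^bsub>Q\<^esub> b \<odot>\<^bsub>Q\<^esub> x"
      using H by blast
  next
    fix a x y assume "a \<in> carrier A" "x \<in> carrier Q" "y \<in> carrier Q"
    then show "a \<odot>\<^bsub>Q\<^esub> (x \<oplus>\<^bsub>Q\<^esub> y) = a \<odot>\<^bsub>Q\<^esub> x \<oplus>\<^bsub>Q\<^esub> a \<odot>\<^bsub>Q\<^esub> y"
      using H by blast
  next
    fix a b x assume "a \<in> carrier A" "b \<in> carrier A" "x \<in> carrier Q"
    then show "(a \<otimes>\<^bsub>A\<^esub> b) \<odot>\<^bsub>Q\<^esub> x = a \<odot>\<^bsub>Q\<^esub> (b \<odot>\<^bsub>Q\<^esub> x)"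
      using H by blast
  next
    fix x assume x: "x \<in> carrier Q"
    have "\<one>\<^bsub>A\<^esub> \<in> carrier A" using lm_ring[OF lM] ring.ring_simprules(6) by blast
    then show "\<one>\<^bsub>A\<^esub> \<odot>\<^bsub>Q\<^esub> x = x" using H x by blast
  qed
qed

lemma qr_hom: "mod_hom A M Q qr"
  unfolding mod_hom_def using qr_closed qr_absorb1 qr_absorb2 qr_absorb3 by auto

lemma qr_ker: "m \<in> carrier M \<Longrightarrow> qr m = \<zero>\<^bsub>Q\<^esub> \<longleftrightarrow> m \<in> K"
proof -
  assume m: "m \<in> carrier M"
  have "m \<ominus>\<^bsub>M\<^esub> \<zero>\<^bsub>M\<^esub> = m" using m by (simp add: minus_eq)
  then show ?thesis using qr_eq_iff[OF m zero_closed] by (simp add: rel_def)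
qed

end

lemma ex_quot: assumes "M \<in> Amod A" "K \<subseteq> carrier M" "\<zero>\<^bsub>M\<^esub> \<in> K"
  "\<And>x y. x \<in> K \<Longrightarrow> y \<in> K \<Longrightarrow> x \<oplus>\<^bsub>M\<^esub> y \<in> K"
  "\<And>x. x \<in> K \<Longrightarrow> \<ominus>\<^bsub>M\<^esub> x \<in> K"
  "\<And>a x. a \<in> carrier A \<Longrightarrow> x \<in> K \<Longrightarrow> a \<odot>\<^bsub>M\<^esub> x \<in> K"
  shows "\<exists>Q\<in>Amod A. \<exists>q. mod_hom A M Q q \<and> q ` carrier M = carrier Q \<and> (\<forall>m\<in>carrier M. q m = \<zero>\<^bsub>Q\<^esub> \<longleftrightarrow> m \<in> K)"
proof -
  have lMM: "left_module A M" "fin_gen A M" using assms by (auto simp: Amod_def)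
  interpret qctx A M K using assms lMM by (unfold_locales) auto
  have "fin_gen A Q" by (rule fin_gen_image[OF qr_hom lMM(1) Q_lm lMM(2)]) simp
  then have "Q \<in> Amod A" using Q_lm by (simp add: Amod_def)
  then show ?thesis using qr_hom qr_ker by (intro bexI[of _ Q] exI[of _ qr]) auto
qed


lemma hom_eq_diff: assumes "mod_hom A M N q" "left_module A M" "left_module A N" "a \<in> carrier M" "b \<in> carrier M"
  "q (a \<ominus>\<^bsub>M\<^esub> b) = \<zero>\<^bsub>N\<^esub>" shows "q a = q b"
proof -
  have "q a \<ominus>\<^bsub>N\<^esub> q b = \<zero>\<^bsub>N\<^esub>" using hom_diff[OF assms(1-5)] assms(6) by simp
  then show ?thesis using ag_diff0[OF lm_ag[OF assms(3)]] hom_closed[OF assms(1)] assms(4,5) by blast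
qed

lemma ses_comp: assumes s0: "ses A X0 W0 Y0" and s1: "ses A W0 M V"
  and Am: "X0 \<in> Amod A" "W0 \<in> Amod A" "Y0 \<in> Amod A" "M \<in> Amod A" "V \<in> Amod A"
  shows "\<exists>Q\<in>Amod A. ses A X0 M Q \<and> ses A Y0 Q V"
proof -
  have l: "left_module A X0" "left_module A W0" "left_module A Y0" "left_module A M" "left_module A V"
    using Am by (auto simp: Amod_def)
  interpret X0: abelian_group X0 using lm_ag[OF l(1)] .
  interpret W0: abelian_group W0 using lm_ag[OF l(2)] .
  interpret Y0: abelian_group Y0 using lm_ag[OF l(3)] .
  interpret M: abelian_group M using lm_ag[OF l(4)] .
  interpret V: abelian_group V using lm_ag[OF l(5)] .
  obtain f0 g0 where F0: "mod_hom A X0 W0 f0" "mod_hom A W0 Y0 g0" "inj_on f0 (carrier X0)" "g0 ` carrier W0 = carrier Y0"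
     "f0 ` carrier X0 = {y \<in> carrier W0. g0 y = \<zero>\<^bsub>Y0\<^esub>}" by (rule ses_data[OF s0])
  obtain f g where F: "mod_hom A W0 M f" "mod_hom A M V g" "inj_on f (carrier W0)" "g ` carrier M = carrier V"
     "f ` carrier W0 = {y \<in> carrier M. g y = \<zero>\<^bsub>V\<^esub>}" by (rule ses_data[OF s1])
  define k where "k x = f (f0 x)" for x
  have hk: "mod_hom A X0 M k" unfolding k_def by (rule hom_comp[OF F0(1) F(1)])
  have kinj: "inj_on k (carrier X0)" unfolding k_def using F0(3) F(3) hom_closed[OF F0(1)]
    by (auto simp: inj_on_def)
  define K where "K = k ` carrier X0"
  have KM: "K \<subseteq> carrier M" using hom_closed[OF hk] by (auto simp: K_def)
  have K0: "\<zero>\<^bsub>M\<^esub> \<in> K" using hom_zero[OF hk l(1,4)] X0.zero_closed unfolding K_def by (metis image_eqI)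
  have Kadd: "x \<oplus>\<^bsub>M\<^esub> y \<in> K" if "x \<in> K" "y \<in> K" for x y
  proof -
    have "x \<in> k ` carrier X0" "y \<in> k ` carrier X0" using that unfolding K_def by auto
    then obtain a b where "a \<in> carrier X0" "x = k a" "b \<in> carrier X0" "y = k b" by blast
    then show ?thesis using hom_add[OF hk] unfolding K_def by (metis X0.a_closed image_eqI)
  qed
  have Kneg: "\<ominus>\<^bsub>M\<^esub> x \<in> K" if xK: "x \<in> K" for x
  proof -
    obtain a where "a \<in> carrier X0" "x = k a" using xK by (auto simp: K_def)
    then show ?thesis using hom_minus[OF hk l(1,4)] unfolding K_def by (metis X0.a_inv_closed image_eqI)
  qed
  have Ksm: "a \<odot>\<^bsub>M\<^esub> x \<in> K" if aK: "a \<in> carrier A" "x \<in> K" for a x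
  proof -
    obtain b where "b \<in> carrier X0" "x = k b" using aK by (auto simp: K_def)
    then show ?thesis using hom_smult[OF hk] aK lm_smult_closed[OF l(1)] unfolding K_def by (metis image_eqI)
  qed
  obtain Q q where Q: "Q \<in> Amod A" "mod_hom A M Q q" "q ` carrier M = carrier Q"
    "\<forall>m\<in>carrier M. q m = \<zero>\<^bsub>Q\<^esub> \<longleftrightarrow> m \<in> K"
    using ex_quot[OF Am(4) KM K0 Kadd Kneg Ksm] by blast
  have lQ: "left_module A Q" using Q by (auto simp: Amod_def)
  interpret Q: abelian_group Q using lm_ag[OF lQ] .
  have ses1: "ses A X0 M Q" unfolding ses_def
  proof (intro exI conjI)
    show "mod_hom A X0 M k" "mod_hom A M Q q" "inj_on k (carrier X0)" "q ` carrier M = carrier Q" by fact+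
    show "k ` carrier X0 = {y \<in> carrier M. q y = \<zero>\<^bsub>Q\<^esub>}" using Q(4) KM by (auto simp: K_def)
  qed
  have cf: "\<And>w. w \<in> carrier W0 \<Longrightarrow> f w \<in> carrier M" "\<And>w. w \<in> carrier W0 \<Longrightarrow> g0 w \<in> carrier Y0"
    "\<And>x. x \<in> carrier X0 \<Longrightarrow> f0 x \<in> carrier W0" "\<And>m. m \<in> carrier M \<Longrightarrow> q m \<in> carrier Q"
    "\<And>m. m \<in> carrier M \<Longrightarrow> g m \<in> carrier V"
    using hom_closed[OF F(1)] hom_closed[OF F0(2)] hom_closed[OF F0(1)] hom_closed[OF Q(2)] hom_closed[OF F(2)] by auto
  define sw where "sw y = (SOME w. w \<in> carrier W0 \<and> g0 w = y)" for y
  have sw: "sw y \<in> carrier W0 \<and> g0 (sw y) = y" if y: "y \<in> carrier Y0" for y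
  proof -
    have "y \<in> g0 ` carrier W0" using y F0(4) by simp
    then obtain w where "w \<in> carrier W0" "g0 w = y" by (rule imageE) simp
    then show ?thesis unfolding sw_def by (intro someI[of "\<lambda>w. w \<in> carrier W0 \<and> g0 w = y"]) simp
  qed
  define sm where "sm z = (SOME m. m \<in> carrier M \<and> q m = z)" for z
  have sm: "sm z \<in> carrier M \<and> q (sm z) = z" if z: "z \<in> carrier Q" for z
  proof -
    have "z \<in> q ` carrier M" using z Q(3) by simp
    then obtain m where "m \<in> carrier M" "q m = z" by (rule imageE) simp
    then show ?thesis unfolding sm_def by (intro someI[of "\<lambda>m. m \<in> carrier M \<and> q m = z"]) simp
  qed
  define h where "h y = q (f (sw y))" for y
  define lq where "lq z = g (sm z)" for z
  have hg0: "h (g0 w) = q (f w)" if w: "w \<in> carrier W0" for w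
  proof -
    have s: "sw (g0 w) \<in> carrier W0" "g0 (sw (g0 w)) = g0 w" using sw[OF cf(2)[OF w]] by auto
    have "g0 (sw (g0 w) \<ominus>\<^bsub>W0\<^esub> w) = \<zero>\<^bsub>Y0\<^esub>" using hom_diff[OF F0(2) l(2,3) s(1) w] s(2) cf(2)[OF w]
      by (simp add: Y0.minus_eq Y0.r_neg)
    then have "sw (g0 w) \<ominus>\<^bsub>W0\<^esub> w \<in> f0 ` carrier X0" using F0(5) s(1) w by auto
    then obtain x where x: "x \<in> carrier X0" "f0 x = sw (g0 w) \<ominus>\<^bsub>W0\<^esub> w" by auto
    have "f (sw (g0 w)) \<ominus>\<^bsub>M\<^esub> f w = k x" using hom_diff[OF F(1) l(2,4) s(1) w] x by (simp add: k_def)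
    moreover have kx: "k x \<in> carrier M" "k x \<in> K" using hom_closed[OF hk x(1)] x(1) by (auto simp: K_def)
    moreover have "q (k x) = \<zero>\<^bsub>Q\<^esub>" using Q(4) kx by blast
    ultimately have "q (f (sw (g0 w)) \<ominus>\<^bsub>M\<^esub> f w) = \<zero>\<^bsub>Q\<^esub>" by simp
    then show ?thesis unfolding h_def using hom_eq_diff[OF Q(2) l(4) lQ] cf s(1) w by blast
  qed
  have lqq: "lq (q m) = g m" if m: "m \<in> carrier M" for m
  proof -
    have s: "sm (q m) \<in> carrier M" "q (sm (q m)) = q m" using sm[OF cf(4)[OF m]] by auto
    have "q (sm (q m) \<ominus>\<^bsub>M\<^esub> m) = \<zero>\<^bsub>Q\<^esub>" using hom_diff[OF Q(2) l(4) lQ s(1) m] s(2) cf(4)[OF m]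
      by (simp add: Q.minus_eq Q.r_neg)
    then have "sm (q m) \<ominus>\<^bsub>M\<^esub> m \<in> K" using Q(4) s(1) m by auto
    then obtain x where x: "x \<in> carrier X0" "k x = sm (q m) \<ominus>\<^bsub>M\<^esub> m" by (auto simp: K_def)
    have "g (k x) = \<zero>\<^bsub>V\<^esub>" using F(5) cf(3)[OF x(1)] unfolding k_def by blast
    then have "g (sm (q m) \<ominus>\<^bsub>M\<^esub> m) = \<zero>\<^bsub>V\<^esub>" using x by simp
    then show ?thesis unfolding lq_def using hom_eq_diff[OF F(2) l(4,5)] s(1) m by blast
  qed
  have hh: "mod_hom A Y0 Q h" unfolding mod_hom_def
  proof (intro conjI ballI)
    show "h \<in> carrier Y0 \<rightarrow> carrier Q" unfolding h_def using sw cf by auto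
    fix y1 y2 assume y: "y1 \<in> carrier Y0" "y2 \<in> carrier Y0"
    obtain w1 w2 where w: "w1 \<in> carrier W0" "w2 \<in> carrier W0" "y1 = g0 w1" "y2 = g0 w2"
      using sw[OF y(1)] sw[OF y(2)] by metis
    have "h (y1 \<oplus>\<^bsub>Y0\<^esub> y2) = h (g0 (w1 \<oplus>\<^bsub>W0\<^esub> w2))" using w hom_add[OF F0(2)] by simp
    also have "\<dots> = q (f (w1 \<oplus>\<^bsub>W0\<^esub> w2))" using hg0 w by simp
    also have "\<dots> = q (f w1) \<oplus>\<^bsub>Q\<^esub> q (f w2)" using w hom_add[OF F(1)] hom_add[OF Q(2)] cf by simp
    also have "\<dots> = h y1 \<oplus>\<^bsub>Q\<^esub> h y2" using hg0 w by simp
    finally show "h (y1 \<oplus>\<^bsub>Y0\<^esub> y2) = h y1 \<oplus>\<^bsub>Q\<^esub> h y2" .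
  next
    fix a y assume a: "a \<in> carrier A" and y: "y \<in> carrier Y0"
    obtain w where w: "w \<in> carrier W0" "y = g0 w" using sw[OF y] by metis
    have "h (a \<odot>\<^bsub>Y0\<^esub> y) = h (g0 (a \<odot>\<^bsub>W0\<^esub> w))" using w a hom_smult[OF F0(2)] by simp
    also have "\<dots> = q (f (a \<odot>\<^bsub>W0\<^esub> w))" using hg0 w a l(2) by simp
    also have "\<dots> = a \<odot>\<^bsub>Q\<^esub> q (f w)" using w a hom_smult[OF F(1)] hom_smult[OF Q(2)] cf by simp
    also have "\<dots> = a \<odot>\<^bsub>Q\<^esub> h y" using hg0 w by simp
    finally show "h (a \<odot>\<^bsub>Y0\<^esub> y) = a \<odot>\<^bsub>Q\<^esub> h y" .
  qed
  have hl: "mod_hom A Q V lq" unfolding mod_hom_def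
  proof (intro conjI ballI)
    show "lq \<in> carrier Q \<rightarrow> carrier V" unfolding lq_def using sm cf by auto
    fix z1 z2 assume z: "z1 \<in> carrier Q" "z2 \<in> carrier Q"
    obtain m1 m2 where m: "m1 \<in> carrier M" "m2 \<in> carrier M" "z1 = q m1" "z2 = q m2"
      using sm[OF z(1)] sm[OF z(2)] by metis
    have "lq (z1 \<oplus>\<^bsub>Q\<^esub> z2) = lq (q (m1 \<oplus>\<^bsub>M\<^esub> m2))" using m hom_add[OF Q(2)] by simp
    also have "\<dots> = g (m1 \<oplus>\<^bsub>M\<^esub> m2)" using lqq m by simp
    also have "\<dots> = lq z1 \<oplus>\<^bsub>V\<^esub> lq z2" using m hom_add[OF F(2)] lqq by simp
    finally show "lq (z1 \<oplus>\<^bsub>Q\<^esub> z2) = lq z1 \<oplus>\<^bsub>V\<^esub> lq z2" .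
  next
    fix a z assume a: "a \<in> carrier A" and z: "z \<in> carrier Q"
    obtain m where m: "m \<in> carrier M" "z = q m" using sm[OF z] by metis
    have "lq (a \<odot>\<^bsub>Q\<^esub> z) = lq (q (a \<odot>\<^bsub>M\<^esub> m))" using m a hom_smult[OF Q(2)] by simp
    also have "\<dots> = g (a \<odot>\<^bsub>M\<^esub> m)" using lqq m a l(4) by simp
    also have "\<dots> = a \<odot>\<^bsub>V\<^esub> lq z" using m a hom_smult[OF F(2)] lqq by simp
    finally show "lq (a \<odot>\<^bsub>Q\<^esub> z) = a \<odot>\<^bsub>V\<^esub> lq z" .
  qed
  have hinj: "inj_on h (carrier Y0)"
  proof (rule inj_ker[OF hh l(3) lQ], intro ballI impI)
    fix y assume y: "y \<in> carrier Y0" "h y = \<zero>\<^bsub>Q\<^esub>"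
    obtain w where w: "w \<in> carrier W0" "y = g0 w" using sw[OF y(1)] by metis
    have "q (f w) = \<zero>\<^bsub>Q\<^esub>" using y w hg0 by simp
    then have "f w \<in> K" using Q(4) cf w by blast
    then obtain x where x: "x \<in> carrier X0" "f (f0 x) = f w" by (auto simp: K_def k_def)
    then have "f0 x = w" using F(3) cf(3) w by (auto simp: inj_on_def)
    moreover have "g0 (f0 x) = \<zero>\<^bsub>Y0\<^esub>" using F0(5) x(1) by blast
    ultimately show "y = \<zero>\<^bsub>Y0\<^esub>" using w by simp
  qed
  have lsurj: "lq ` carrier Q = carrier V"
  proof
    show "lq ` carrier Q \<subseteq> carrier V" using hom_closed[OF hl] by blast
    show "carrier V \<subseteq> lq ` carrier Q"
    proof
      fix v assume "v \<in> carrier V"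
      then have "v \<in> g ` carrier M" using F(4) by simp
      then obtain m where m: "m \<in> carrier M" "v = g m" by (rule imageE) simp
      then show "v \<in> lq ` carrier Q" using lqq cf(4) by (metis image_eqI)
    qed
  qed
  have ex: "h ` carrier Y0 = {z \<in> carrier Q. lq z = \<zero>\<^bsub>V\<^esub>}"
  proof
    show "h ` carrier Y0 \<subseteq> {z \<in> carrier Q. lq z = \<zero>\<^bsub>V\<^esub>}"
    proof
      fix z assume "z \<in> h ` carrier Y0"
      then obtain y where y: "y \<in> carrier Y0" "z = h y" by blast
      obtain w where w: "w \<in> carrier W0" "y = g0 w" using sw[OF y(1)] by metis
      have "z = q (f w)" using y w hg0 by simp
      moreover have "f w \<in> f ` carrier W0" using w by simp
      then have "g (f w) = \<zero>\<^bsub>V\<^esub>" using F(5) by simp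
      ultimately show "z \<in> {z \<in> carrier Q. lq z = \<zero>\<^bsub>V\<^esub>}" using lqq cf w by simp
    qed
    show "{z \<in> carrier Q. lq z = \<zero>\<^bsub>V\<^esub>} \<subseteq> h ` carrier Y0"
    proof
      fix z assume "z \<in> {z \<in> carrier Q. lq z = \<zero>\<^bsub>V\<^esub>}"
      then have z: "z \<in> carrier Q" "lq z = \<zero>\<^bsub>V\<^esub>" by auto
      obtain m where m: "m \<in> carrier M" "z = q m" using sm[OF z(1)] by metis
      have "g m = \<zero>\<^bsub>V\<^esub>" using z m lqq by simp
      then have "m \<in> f ` carrier W0" using F(5) m by simp
      then obtain w where w: "w \<in> carrier W0" "f w = m" by (rule imageE) simp
      have "z = h (g0 w)" using hg0 w m by simp
      then show "z \<in> h ` carrier Y0" using cf(2) w by (intro image_eqI)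
    qed
  qed
  have ses2: "ses A Y0 Q V" unfolding ses_def using hh hl hinj lsurj ex by blast
  show ?thesis using Q(1) ses1 ses2 by blast
qed


definition E where "E A X Y = {X' \<in> Amod A. \<exists>M1\<in>X. \<exists>M2\<in>Y. ses A M1 X' M2}"

lemma bullet_E: "bullet A X Y = addc A (E A X Y)"
  by (simp add: bullet_def E_def)

lemma E_sub: "E A X Y \<subseteq> Amod A" by (auto simp: E_def)

definition good where "good A S \<longleftrightarrow> S \<subseteq> Amod A \<and> (\<forall>M\<in>Amod A. zero_mod M \<longrightarrow> M \<in> S) \<and>
   (\<forall>Y\<in>S. \<forall>Z\<in>S. \<forall>X\<in>Amod A. is_biprod A X Y Z \<longrightarrow> X \<in> S)"

lemma good_addc: "S \<subseteq> Amod A \<Longrightarrow> good A (addc A S)"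
  unfolding good_def using addc_sub addc_zero addc_biprod by blast

lemma good_bullet: "good A (bullet A X Y)"
  unfolding bullet_E by (rule good_addc[OF E_sub])

lemma bullet_mono: "X \<subseteq> X' \<Longrightarrow> Y \<subseteq> Y' \<Longrightarrow> bullet A X Y \<subseteq> bullet A X' Y'"
  unfolding bullet_E by (rule addc_mono[OF _ E_sub]) (auto simp: E_def)

lemma lm_of: "M \<in> Amod A \<Longrightarrow> left_module A M" by (simp add: Amod_def)

lemma good_E: assumes "good A X" "good A Y" shows "good A (E A X Y)"
  unfolding good_def
proof (intro conjI ballI impI)
  show "E A X Y \<subseteq> Amod A" by (rule E_sub)
next
  fix M assume M: "M \<in> Amod A" "zero_mod M"
  have "M \<in> X" "M \<in> Y" using assms M unfolding good_def by auto
  moreover have "ses A M M M" using ses_left[OF lm_of[OF M(1)] lm_of[OF M(1)] M(2)] .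
  ultimately show "M \<in> E A X Y" using M by (auto simp: E_def)
next
  fix M1 M2 X' assume m: "M1 \<in> E A X Y" "M2 \<in> E A X Y" "X' \<in> Amod A" "is_biprod A X' M1 M2"
  obtain U1 V1 where 1: "U1 \<in> X" "V1 \<in> Y" "ses A U1 M1 V1" "M1 \<in> Amod A" using m(1) by (auto simp: E_def)
  obtain U2 V2 where 2: "U2 \<in> X" "V2 \<in> Y" "ses A U2 M2 V2" "M2 \<in> Amod A" using m(2) by (auto simp: E_def)
  have XA: "X \<subseteq> Amod A" "Y \<subseteq> Amod A" using assms by (auto simp: good_def)
  obtain U where U: "U \<in> Amod A" "is_biprod A U U1 U2" using ex_biprod[of U1 A U2] 1 2 XA by blast
  obtain V where V: "V \<in> Amod A" "is_biprod A V V1 V2" using ex_biprod[of V1 A V2] 1 2 XA by blast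
  have UX: "U \<in> X" using assms(1) U 1 2 unfolding good_def by blast
  have VY: "V \<in> Y" using assms(2) V 1 2 unfolding good_def by blast
  have "ses A U X' V"
    by (rule ses_biprod[OF 1(3) 2(3) U(2) m(4) V(2)]) (use U V m 1 2 XA lm_of in blast)+
  then show "X' \<in> E A X Y" using UX VY m(3) by (auto simp: E_def)
qed

lemma dsums_good: assumes "good A S" "W \<in> dsums A S" shows "W \<in> S"
  using assms(2)
proof (induction rule: dsums.induct)
  case (dsums_zero M) then show ?case using assms(1) by (auto simp: good_def)
next
  case (dsums_step Y Z X) then show ?case using assms(1) unfolding good_def by blast
qed

lemma assoc: assumes gX: "good A X" and gY: "good A Y" and ZA: "Z \<subseteq> Amod A" and rA: "ring A"
  shows "bullet A (bullet A X Y) Z \<subseteq> bullet A X (bullet A Y Z)"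
proof -
  let ?T = "bullet A X (bullet A Y Z)"
  have key: "E A (bullet A X Y) Z \<subseteq> ?T"
  proof
    fix M assume "M \<in> E A (bullet A X Y) Z"
    then obtain U V where M: "M \<in> Amod A" "U \<in> bullet A X Y" "V \<in> Z" "ses A U M V" by (auto simp: E_def)
    obtain W Zc where W: "W \<in> dsums A (E A X Y)" "Zc \<in> Amod A" "is_biprod A W U Zc" and UA: "U \<in> Amod A"
      using M(2) unfolding bullet_E addc_def by blast
    have WE: "W \<in> E A X Y" by (rule dsums_good[OF good_E[OF gX gY] W(1)])
    obtain X0 Y0 where X0: "X0 \<in> X" "Y0 \<in> Y" "ses A X0 W Y0" "W \<in> Amod A" using WE by (auto simp: E_def)
    obtain M' where M': "M' \<in> Amod A" "is_biprod A M' M Zc" using ex_biprod[OF M(1) W(2)] by blast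
    have VA: "V \<in> Amod A" using M ZA by auto
    have z: "zmod \<in> Amod A" "zero_mod zmod" using zmod_Amod[OF rA] by auto
    have s2: "ses A Zc Zc zmod" using ses_left[OF lm_of[OF W(2)] lm_of[OF z(1)] z(2)] .
    have bV: "is_biprod A V V zmod" using biprod_zero[OF lm_of[OF VA] lm_of[OF z(1)] z(2)] .
    have sW: "ses A W M' V"
      by (rule ses_biprod[OF M(4) s2 W(3) M'(2) bV]) (use M M' W UA VA z X0 lm_of in blast)+
    have XA: "X \<subseteq> Amod A" "Y \<subseteq> Amod A" using gX gY by (auto simp: good_def)
    obtain Q where Q: "Q \<in> Amod A" "ses A X0 M' Q" "ses A Y0 Q V"
      using ses_comp[OF X0(3) sW _ X0(4) _ M'(1) VA] X0 XA by blast
    have "Q \<in> E A Y Z" using Q X0 M by (auto simp: E_def)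
    then have "Q \<in> bullet A Y Z" unfolding bullet_E using addc_base[OF E_sub] by blast
    then have M'T: "M' \<in> E A X (bullet A Y Z)" using Q X0 M' by (auto simp: E_def)
    then have "M' \<in> ?T" unfolding bullet_E using addc_base[OF E_sub] by blast
    obtain i1 i2 p1 p2 where b: "mod_hom A M M' i1" "mod_hom A M' M p1" "\<forall>x\<in>carrier M. p1 (i1 x) = x"
      using biprod_lms[OF M'(2) lm_of[OF M'(1)] lm_of[OF M(1)] lm_of[OF W(2)]] by metis
    show "M \<in> ?T" unfolding bullet_E
      by (rule addc_summand[OF _ M(1) b E_sub]) (use \<open>M' \<in> ?T\<close> in \<open>simp add: bullet_E\<close>)
  qed
  have "bullet A (bullet A X Y) Z = addc A (E A (bullet A X Y) Z)" by (rule bullet_E)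
  also have "\<dots> \<subseteq> addc A ?T" by (rule addc_mono[OF key]) (simp add: bullet_E addc_sub)
  also have "\<dots> \<subseteq> ?T" unfolding bullet_E by (rule addc_idem[OF E_sub])
  finally show ?thesis .
qed


lemma good_layer: "T \<in> Amod A \<Longrightarrow> good A (layer A T (Suc n))"
  by (cases n) (auto intro: good_addc good_bullet)

lemma layer_add: assumes "T \<in> Amod A" "ring A"
  shows "bullet A (layer A T (Suc a)) (layer A T (Suc b)) \<subseteq> layer A T (Suc a + Suc b)"
proof (induction a)
  case 0 then show ?case by simp
next
  case (Suc a)
  let ?P = "addc A {T}"
  have gP: "good A ?P" using good_addc assms(1) by blast
  have "bullet A (layer A T (Suc (Suc a))) (layer A T (Suc b)) = bullet A (bullet A ?P (layer A T (Suc a))) (layer A T (Suc b))"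
    by simp
  also have "\<dots> \<subseteq> bullet A ?P (bullet A (layer A T (Suc a)) (layer A T (Suc b)))"
    by (rule assoc[OF gP good_layer[OF assms(1)] _ assms(2)]) (use good_layer[OF assms(1)] in \<open>auto simp: good_def\<close>)
  also have "\<dots> \<subseteq> bullet A ?P (layer A T (Suc a + Suc b))"
    by (rule bullet_mono[OF _ Suc]) simp
  also have "\<dots> = layer A T (Suc (Suc a) + Suc b)" by simp
  finally show ?case .
qed

lemma layer_monoT: assumes "addc A {T'} \<subseteq> addc A {T}"
  shows "layer A T' (Suc n) \<subseteq> layer A T (Suc n)"
proof (induction n)
  case 0 then show ?case using assms by simp
next
  case (Suc n) then show ?case using assms by (simp add: bullet_mono)
qed

lemma bullets_bound: assumes "T \<in> Amod A" "ring A"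
  shows "length ns = length Cs \<Longrightarrow> Cs \<noteq> [] \<Longrightarrow> (\<forall>i<length Cs. Cs!i \<subseteq> layer A T (Suc (ns!i)))
    \<Longrightarrow> bullets A Cs \<subseteq> layer A T (sum_list (map Suc ns))"
proof (induction Cs arbitrary: ns)
  case Nil then show ?case by simp
next
  case (Cons C Cs')
  obtain n ns' where ns: "ns = n # ns'" using Cons(2) by (cases ns) auto
  show ?case
  proof (cases Cs')
    case Nil
    then show ?thesis using Cons ns by auto
  next
    case (Cons D Ds)
    have h: "C \<subseteq> layer A T (Suc n)" using Cons.prems(3) ns by (metis length_greater_0_conv list.distinct(1) nth_Cons_0)
    have IH: "bullets A Cs' \<subseteq> layer A T (sum_list (map Suc ns'))"
      using Cons.IH[of ns'] Cons.prems ns Cons by fastforce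
    obtain m where m: "sum_list (map Suc ns') = Suc m" using Cons Cons.prems ns
      by (cases ns') auto
    have "bullets A (C # Cs') = bullet A C (bullets A Cs')" using Cons by simp
    also have "\<dots> \<subseteq> bullet A (layer A T (Suc n)) (layer A T (Suc m))" using h IH m by (intro bullet_mono) auto
    also have "\<dots> \<subseteq> layer A T (Suc n + Suc m)" by (rule layer_add[OF assms])
    finally show ?thesis using ns m by simp
  qed
qed

lemma ed_le: "T \<in> Amod A \<Longrightarrow> C \<subseteq> layer A T (n + 1) \<Longrightarrow> ed A C \<le> enat n"
  unfolding ed_def by (rule Inf_lower) blast

lemma ed_mono: "C \<subseteq> D \<Longrightarrow> ed A C \<le> ed A D"
  unfolding ed_def by (rule Inf_superset_mono) blast

lemma ed_fin: assumes "ed A C = enat n" shows "\<exists>T\<in>Amod A. C \<subseteq> layer A T (n + 1)"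
proof -
  let ?S = "{enat n | n. \<exists>T\<in>Amod A. C \<subseteq> layer A T (n + 1)}"
  have ne: "?S \<noteq> {}"
  proof
    assume "?S = {}"
    then have "ed A C = \<infinity>" unfolding ed_def by (simp only: Inf_enat_def) simp
    then show False using assms by simp
  qed
  then obtain x where "x \<in> ?S" by blast
  then have "(LEAST x. x \<in> ?S) \<in> ?S" by (rule LeastI)
  moreover have "Inf ?S = (LEAST x. x \<in> ?S)" by (subst Inf_enat_def) (simp only: ne if_False)
  ultimately have "Inf ?S \<in> ?S" by simp
  then show ?thesis using assms unfolding ed_def by auto
qed

lemma combine: assumes "ring A" shows "set Ts \<subseteq> Amod A \<Longrightarrow> \<exists>T\<in>Amod A. \<forall>T'\<in>set Ts. addc A {T'} \<subseteq> addc A {T}"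
proof (induction Ts)
  case Nil then show ?case using zmod_Amod[OF assms] by auto
next
  case (Cons T1 Ts)
  obtain T' where T': "T' \<in> Amod A" "\<forall>T''\<in>set Ts. addc A {T''} \<subseteq> addc A {T'}" using Cons by auto
  have T1: "T1 \<in> Amod A" using Cons by auto
  obtain T where T: "T \<in> Amod A" "is_biprod A T T1 T'" using ex_biprod[OF T1 T'(1)] by blast
  obtain i1 i2 p1 p2 where b: "bp A T T1 T' i1 i2 p1 p2" using bp_of[OF T(2) lm_of[OF T(1)] lm_of[OF T1] lm_of[OF T'(1)]] by blast
  interpret bp A T T1 T' i1 i2 p1 p2 by (rule b)
  have TA: "{T} \<subseteq> Amod A" using T by auto
  have TT: "T \<in> addc A {T}" using addc_base[OF TA] by blast
  have "T1 \<in> addc A {T}" by (rule addc_summand[OF TT T1 hi1 hp1 p1i1 TA])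
  then have 1: "addc A {T1} \<subseteq> addc A {T}" using addc_mono[of "{T1}" "addc A {T}" A] addc_sub addc_idem[OF TA] by blast
  have "T' \<in> addc A {T}" by (rule addc_summand[OF TT T'(1) hi2 hp2 p2i2 TA])
  then have 2: "addc A {T'} \<subseteq> addc A {T}" using addc_mono[of "{T'}" "addc A {T}" A] addc_sub addc_idem[OF TA] by blast
  have "\<forall>T''\<in>set (T1 # Ts). addc A {T''} \<subseteq> addc A {T}"
  proof
    fix T'' assume "T'' \<in> set (T1 # Ts)"
    then show "addc A {T''} \<subseteq> addc A {T}" using 1 2 T'(2) by (auto intro: subset_trans)
  qed
  then show ?case using T(1) by blast
qed

lemma left_in: assumes "good A X" "good A Y" "ring A" shows "X \<subseteq> bullet A X Y"
proof
  fix M assume M: "M \<in> X"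
  have MA: "M \<in> Amod A" using M assms by (auto simp: good_def)
  have z: "zmod \<in> Amod A" "zero_mod zmod" using zmod_Amod[OF assms(3)] by auto
  have "zmod \<in> Y" using z assms(2) by (auto simp: good_def)
  moreover have "ses A M M zmod" using ses_left[OF lm_of[OF MA] lm_of[OF z(1)] z(2)] .
  ultimately have "M \<in> E A X Y" using M MA by (auto simp: E_def)
  then show "M \<in> bullet A X Y" unfolding bullet_E using addc_base[OF E_sub] by blast
qed

lemma right_in: assumes "good A X" "good A Y" "ring A" shows "Y \<subseteq> bullet A X Y"
proof
  fix M assume M: "M \<in> Y"
  have MA: "M \<in> Amod A" using M assms by (auto simp: good_def)
  have z: "zmod \<in> Amod A" "zero_mod zmod" using zmod_Amod[OF assms(3)] by auto
  have "zmod \<in> X" using z assms(1) by (auto simp: good_def)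
  moreover have "ses A zmod M M" using ses_right[OF lm_of[OF MA] lm_of[OF z(1)] z(2)] .
  ultimately have "M \<in> E A X Y" using M MA by (auto simp: E_def)
  then show "M \<in> bullet A X Y" unfolding bullet_E using addc_base[OF E_sub] by blast
qed

lemma sub_bullets: assumes "ring A"
  shows "Cs \<noteq> [] \<Longrightarrow> \<forall>C\<in>set Cs. good A C \<Longrightarrow> good A (bullets A Cs) \<and> (\<forall>C\<in>set Cs. C \<subseteq> bullets A Cs)"
proof (induction Cs)
  case Nil then show ?case by simp
next
  case (Cons C Cs')
  show ?case
  proof (cases Cs')
    case Nil then show ?thesis using Cons by simp
  next
    case (Cons D Ds)
    have IH: "good A (bullets A Cs')" "\<forall>C\<in>set Cs'. C \<subseteq> bullets A Cs'" using Cons.IH Cons.prems Cons by auto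
    have gC: "good A C" using Cons.prems by simp
    have eq: "bullets A (C # Cs') = bullet A C (bullets A Cs')" using Cons by simp
    have "C \<subseteq> bullets A (C # Cs')" using left_in[OF gC IH(1) assms] eq by simp
    moreover have "bullets A Cs' \<subseteq> bullets A (C # Cs')" using right_in[OF gC IH(1) assms] eq by simp
    ultimately show ?thesis using IH(2) eq good_bullet by auto
  qed
qed

lemma sum_list_enat: "sum_list (map enat xs) = enat (sum_list xs)"
  by (induction xs) (auto simp: zero_enat_def)

lemma sum_list_Suc: "sum_list (map Suc ns) = sum_list ns + length ns"
  by (induction ns) auto


lemma subcat_good: "subcat A C \<Longrightarrow> good A C"
  unfolding subcat_def good_def by (elim conjE) (intro conjI; assumption)

theorem corollary2p9:
  fixes A :: "'a ring" and Cs :: "'a amod set list"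
  assumes "artin_algebra A"
    and "Cs \<noteq> []"
    and "\<forall>C\<in>set Cs. subcat A C"
  shows "Max (ed A ` set Cs) \<le> ed A (bullets A Cs) \<and>
         ed A (bullets A Cs) \<le> sum_list (map (ed A) Cs) + enat (length Cs - 1)"
proof
  have rA: "ring A" using assms(1) by (simp add: artin_algebra_def)
  have gC: "\<forall>C\<in>set Cs. good A C" using assms(3) subcat_good by blast
  have sb: "\<forall>C\<in>set Cs. C \<subseteq> bullets A Cs" using sub_bullets[OF rA assms(2) gC] by (rule conjunct2)
  have "\<forall>x\<in>ed A ` set Cs. x \<le> ed A (bullets A Cs)" using sb ed_mono by blast
  then show "Max (ed A ` set Cs) \<le> ed A (bullets A Cs)"
    using assms(2) by (subst Max_le_iff) auto
  show "ed A (bullets A Cs) \<le> sum_list (map (ed A) Cs) + enat (length Cs - 1)"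
  proof (cases "\<exists>C\<in>set Cs. ed A C = \<infinity>")
    case True
    then obtain C where C: "C \<in> set Cs" "ed A C = \<infinity>" by blast
    have m: "ed A C \<in> set (map (ed A) Cs)" using C(1) by simp
    have "ed A C \<le> sum_list (map (ed A) Cs)" using member_le_sum_list[of "ed A C" "map (ed A) Cs"] m by simp
    then have "sum_list (map (ed A) Cs) = \<infinity>" using C by simp
    then show ?thesis by simp
  next
    case False
    define N where "N C = the_enat (ed A C)" for C
    have eN: "ed A C = enat (N C)" if "C \<in> set Cs" for C using False that by (auto simp: N_def)
    define Tf where "Tf C = (SOME T. T \<in> Amod A \<and> C \<subseteq> layer A T (N C + 1))" for C
    have Tf: "Tf C \<in> Amod A \<and> C \<subseteq> layer A (Tf C) (N C + 1)" if Cin: "C \<in> set Cs" for C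
    proof -
      obtain T where "T \<in> Amod A" "C \<subseteq> layer A T (N C + 1)" using ed_fin[OF eN[OF Cin]] by blast
      then show ?thesis unfolding Tf_def by (intro someI[of "\<lambda>T. T \<in> Amod A \<and> C \<subseteq> layer A T (N C + 1)"]) simp
    qed
    have "set (map Tf Cs) \<subseteq> Amod A" using Tf by auto
    then obtain T where T: "T \<in> Amod A" "\<forall>T'\<in>set (map Tf Cs). addc A {T'} \<subseteq> addc A {T}"
      using combine[OF rA] by blast
    define ns where "ns = map N Cs"
    have lay: "\<forall>i<length Cs. Cs!i \<subseteq> layer A T (Suc (ns!i))"
    proof (intro allI impI)
      fix i assume i: "i < length Cs"
      let ?C = "Cs!i"
      have C: "?C \<in> set Cs" using i by simp
      have "addc A {Tf ?C} \<subseteq> addc A {T}" using T(2) C by auto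
      then have "layer A (Tf ?C) (Suc (N ?C)) \<subseteq> layer A T (Suc (N ?C))" by (rule layer_monoT)
      then show "Cs!i \<subseteq> layer A T (Suc (ns!i))" using Tf[OF C] i by (auto simp: ns_def)
    qed
    have "bullets A Cs \<subseteq> layer A T (sum_list (map Suc ns))"
      by (rule bullets_bound[OF T(1) rA _ assms(2) lay]) (simp add: ns_def)
    also have "sum_list (map Suc ns) = (sum_list ns + length Cs - 1) + 1"
    proof -
      have "length ns = length Cs" "length Cs \<ge> 1" using assms(2) by (auto simp: ns_def Suc_le_eq)
      then show ?thesis by (simp add: sum_list_Suc)
    qed
    finally have "ed A (bullets A Cs) \<le> enat (sum_list ns + length Cs - 1)" by (rule ed_le[OF T(1)])
    moreover have "sum_list (map (ed A) Cs) = enat (sum_list ns)"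
    proof -
      have "map (ed A) Cs = map enat ns" using eN by (auto simp: ns_def)
      then show ?thesis by (simp add: sum_list_enat)
    qed
    moreover have "enat (sum_list ns) + enat (length Cs - 1) = enat (sum_list ns + length Cs - 1)"
    proof -
      have "length Cs \<ge> 1" using assms(2) by (simp add: Suc_le_eq)
      then show ?thesis by simp
    qed
    ultimately show ?thesis by simp
  qed
qed


end
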